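(* Under the setting in the context, assume $\sigma_A>0$ and $S^2\ge M_iR_i/p_i^2$ for all $i$. Choose, for all $t$, $\alpha_t=\beta_t=\rho$ with $\rho=\sqrt{\sigma_A}\,S^{-1}$, and $A_t=\sigma_A^{-1}B_t=(1-\rho)^{-t}$ (so $A_0=1$, $B_0=\sigma_A$). Then the condition $1-\frac{\alpha_tR_i}{p_i}\ge0$ holds for all $i,t$, and the generalized APCG iterates satisfy $$\sigma_A\,\mathbb{E}\big[\|v_t-\theta^\star\|^2_{A^\dagger A}\big]+2\big[\mathbb{E}[F(x_t)]-F(\theta^\star)\big]\le C_0(1-\rho)^t,$$ with $C_0=B_0\|v_0-\theta^\star\|^2+2A_0[F(x_0)-F(\theta^\star)]$.
   Context: Setting. Minimize $F(x)=f_A(x)+\sum_{i=1}^d\psi_i(x^{(i)})$ over $\mathbb{R}^d$; $\theta^\star$ a minimizer. $A$ is a matrix with $d$ columns, $A^\dagger$ its pseudo-inverse, $\|u\|^2_{A^\dagger A}=u^TA^\dagger Au$, $e_i$ unit vectors, $x^{(i)}=e_i^Tx$, $R_i=e_i^TA^\dagger Ae_i$. Each $\psi_i$ is convex; $f_A$ is differentiable with $f_A(x)-f_A(y)\ge\nabla f_A(y)^TA^\dagger A(x-y)+\frac{\sigma_A}{2}(x-y)^TA^\dagger A(x-y)$ for all $x,y$; $\nabla_if_A=e_ie_i^T\nabla f_A$; $f_A$ is $M_i$-smooth in direction $i$; for every $i$ either $R_i=1$ or $\psi_i=0$; sampling probabilities $p_i>0$ sum to $1$. Generalized APCG with sequences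 $(\alpha_t,\beta_t,A_t,B_t)$, $a_{t+1}=A_{t+1}-A_t$, $\eta_{i,t}=\frac{a_{t+1}}{B_{t+1}p_i}$: $x_0=v_0=0$; for each $t$: $y_t=\frac{(1-\alpha_t)x_t+\alpha_t(1-\beta_t)v_t}{1-\alpha_t\beta_t}$; sample $i$ w.p. $p_i$ independently; $z_{t+1}=v_{t+1}=(1-\beta_t)v_t+\beta_ty_t-\eta_{i,t}\nabla_if_A(y_t)$; replace $v_{t+1}^{(i)}={\rm prox}_{\eta_{i,t}\psi_i}(z_{t+1}^{(i)})$ where ${\rm prox}_{\eta\psi}(x)=\arg\min_v\frac{1}{2\eta}\|v-x\|^2+\psi(v)$; $x_{t+1}=y_t+\frac{\alpha_tR_i}{p_i}(v_{t+1}-(1-\beta_t)v_t-\beta_ty_t)$. *)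

theory Defs
  imports "HOL-Analysis.Analysis"
begin

text \<open>Moore--Penrose pseudo-inverse of a real matrix with columns indexed by 'd,
  defined by the four Penrose conditions (it exists and is unique).\<close>
definition pinv :: "real^'d^'m \<Rightarrow> real^'m^'d" where
  "pinv A = (THE X. A ** X ** A = A \<and> X ** A ** X = X \<and>
                    transpose (A ** X) = A ** X \<and> transpose (X ** A) = X ** A)"

definition projA :: "real^'d^'m \<Rightarrow> real^'d^'d" where
  "projA A = pinv A ** A"

definition sqnormA :: "real^'d^'m \<Rightarrow> real^'d \<Rightarrow> real" where
  "sqnormA A u = u \<bullet> (projA A *v u)"

definition Rcoef :: "real^'d^'m \<Rightarrow> 'd \<Rightarrow> real" where
  "Rcoef A i = axis i 1 \<bullet> (projA A *v axis i 1)"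

definition Fobj :: "(real^'d \<Rightarrow> real) \<Rightarrow> ('d::finite \<Rightarrow> real \<Rightarrow> real) \<Rightarrow> real^'d \<Rightarrow> real" where
  "Fobj f psi x = f x + (\<Sum>i\<in>UNIV. psi i (x $ i))"

definition prox :: "real \<Rightarrow> (real \<Rightarrow> real) \<Rightarrow> real \<Rightarrow> real" where
  "prox eta psi x = (THE v. \<forall>u. 1/(2*eta) * (v - x)^2 + psi v \<le> 1/(2*eta) * (u - x)^2 + psi u)"

definition coord_grad :: "(real^'d \<Rightarrow> real^'d) \<Rightarrow> 'd \<Rightarrow> real^'d \<Rightarrow> real^'d" where
  "coord_grad g i y = (g y $ i) *\<^sub>R axis i 1"

definition apcg_step ::
  "real^'d^'m \<Rightarrow> (real^'d \<Rightarrow> real^'d) \<Rightarrow> ('d \<Rightarrow> real \<Rightarrow> real) \<Rightarrow> ('d \<Rightarrow> real) \<Rightarrow>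
   (nat \<Rightarrow> real) \<Rightarrow> (nat \<Rightarrow> real) \<Rightarrow> (nat \<Rightarrow> real) \<Rightarrow> (nat \<Rightarrow> real) \<Rightarrow>
   nat \<Rightarrow> 'd \<Rightarrow> (real^'d) \<times> (real^'d) \<Rightarrow> (real^'d) \<times> (real^'d)" where
  "apcg_step A g psi p alpha beta As Bs t i xv =
     (let x = fst xv; v = snd xv;
          y = (1 / (1 - alpha t * beta t)) *\<^sub>R
                ((1 - alpha t) *\<^sub>R x + (alpha t * (1 - beta t)) *\<^sub>R v);
          eta = (As (Suc t) - As t) / (Bs (Suc t) * p i);
          z = (1 - beta t) *\<^sub>R v + beta t *\<^sub>R y - eta *\<^sub>R coord_grad g i y;
          v' = (\<chi> j. if j = i then prox eta (psi i) (z $ i) else z $ j);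
          x' = y + (alpha t * Rcoef A i / p i) *\<^sub>R (v' - (1 - beta t) *\<^sub>R v - beta t *\<^sub>R y)
      in (x', v'))"

fun apcg_run ::
  "real^'d^'m \<Rightarrow> (real^'d \<Rightarrow> real^'d) \<Rightarrow> ('d \<Rightarrow> real \<Rightarrow> real) \<Rightarrow> ('d \<Rightarrow> real) \<Rightarrow>
   (nat \<Rightarrow> real) \<Rightarrow> (nat \<Rightarrow> real) \<Rightarrow> (nat \<Rightarrow> real) \<Rightarrow> (nat \<Rightarrow> real) \<Rightarrow>
   nat \<Rightarrow> (real^'d) \<times> (real^'d) \<Rightarrow> 'd list \<Rightarrow> (real^'d) \<times> (real^'d)" where
  "apcg_run A g psi p alpha beta As Bs t xv [] = xv"
| "apcg_run A g psi p alpha beta As Bs t xv (i # is) =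
     apcg_run A g psi p alpha beta As Bs (Suc t) (apcg_step A g psi p alpha beta As Bs t i xv) is"

definition apcg_iter where
  "apcg_iter A g psi p alpha beta As Bs is = apcg_run A g psi p alpha beta As Bs 0 (0, 0) is"

text \<open>Expectation of a function of the sample path of length t, under i.i.d. sampling
  of coordinates with probabilities p.\<close>
definition expect_path :: "('d::finite \<Rightarrow> real) \<Rightarrow> nat \<Rightarrow> ('d list \<Rightarrow> real) \<Rightarrow> real" where
  "expect_path p t h = (\<Sum>is\<in>{is. length is = t}. prod_list (map p is) * h is)"

end

theory Submission
  imports Defs
begin

definition orthp :: "('a::euclidean_space) set \<Rightarrow> 'a \<Rightarrow> 'a" where
  "orthp S x = (SOME y. y \<in> span S \<and> (\<forall>w\<in>span S. (x - y) \<bullet> w = 0))"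

lemma orthp_ex: fixes S :: "'a::euclidean_space set" shows "\<exists>y. y \<in> span S \<and> (\<forall>w\<in>span S. (x - y) \<bullet> w = 0)"
proof -
  obtain y z where "y \<in> span S" "\<And>w. w \<in> span S \<Longrightarrow> orthogonal z w" "x = y + z"
    using orthogonal_subspace_decomp_exists[of S x] by blast
  then show ?thesis by (intro exI[of _ y]) (auto simp: orthogonal_def)
qed

lemma orthp_span: "orthp S x \<in> span S"
  and orthp_orth: "w \<in> span S \<Longrightarrow> (x - orthp S x) \<bullet> w = 0"
  using someI_ex[OF orthp_ex[of S x]] unfolding orthp_def[symmetric] by auto

lemma orthp_unique:
  assumes "y \<in> span S" "\<And>w. w \<in> span S \<Longrightarrow> (x - y) \<bullet> w = 0"
  shows "orthp S x = y"
proof -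
  let ?d = "orthp S x - y"
  have d: "?d \<in> span S" using assms(1) orthp_span span_diff by blast
  have "?d \<bullet> ?d = (x - y) \<bullet> ?d - (x - orthp S x) \<bullet> ?d"
    by (simp add: inner_diff_left)
  also have "\<dots> = 0" using assms(2)[OF d] orthp_orth[OF d] by simp
  finally show ?thesis by simp
qed

lemma orthp_linear: "linear (orthp S)"
proof (rule linearI)
  fix x z
  show "orthp S (x + z) = orthp S x + orthp S z"
    apply (rule orthp_unique)
    using orthp_span span_add apply blast
    apply (simp add: inner_diff_left inner_add_left)
    using orthp_orth[of _ S x] orthp_orth[of _ S z]
    by (simp add: inner_diff_left)
next
  fix c and x :: 'a
  show "orthp S (c *\<^sub>R x) = c *\<^sub>R orthp S x"
    apply (rule orthp_unique)
    apply (simp add: span_scale orthp_span)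
    using orthp_orth[of _ S x]
    by (simp add: inner_diff_left)
qed

lemma orthp_sa: "orthp S x \<bullet> z = x \<bullet> orthp S z"
proof -
  have "orthp S x \<bullet> z = orthp S x \<bullet> orthp S z + (z - orthp S z) \<bullet> orthp S x"
    by (simp add: inner_diff_right inner_commute)
  also have "\<dots> = orthp S x \<bullet> orthp S z" using orthp_orth[OF orthp_span] by simp
  also have "\<dots> = x \<bullet> orthp S z - (x - orthp S x) \<bullet> orthp S z"
    by (simp add: inner_diff_left)
  also have "\<dots> = x \<bullet> orthp S z" using orthp_orth[OF orthp_span] by simp
  finally show ?thesis .
qed

lemma orthp_id: "x \<in> span S \<Longrightarrow> orthp S x = x"
  by (rule orthp_unique) auto

lemma sym_matrix:
  fixes M :: "real^'n^'n"
  assumes "\<And>x y. (M *v x) \<bullet> y = x \<bullet> (M *v y)"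
  shows "transpose M = M"
proof -
  have "transpose M *v y = M *v y" for y
  proof -
    have e: "(transpose M *v y) \<bullet> x = (M *v y) \<bullet> x" for x
    proof -
      have "(transpose M *v y) \<bullet> x = y \<bullet> (M *v x)" by (simp add: dot_lmul_matrix)
      also have "\<dots> = (M *v x) \<bullet> y" by (rule inner_commute)
      also have "\<dots> = x \<bullet> (M *v y)" by (rule assms)
      also have "\<dots> = (M *v y) \<bullet> x" by (rule inner_commute)
      finally show ?thesis .
    qed
    have "(transpose M *v y - M *v y) \<bullet> (transpose M *v y - M *v y) = 0"
      unfolding inner_diff_left[of "transpose M *v y"] e by simp
    then show ?thesis by simp
  qed
  then show ?thesis by (simp add: matrix_eq)
qed

lemma mp_unique:
  fixes A :: "real^'d^'m" and X Y :: "real^'m^'d"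
  assumes X1: "A ** X ** A = A" and X2: "X ** A ** X = X" and X3: "transpose (A ** X) = A ** X"
    and X4: "transpose (X ** A) = X ** A"
    and Y1: "A ** Y ** A = A" and Y2: "Y ** A ** Y = Y" and Y3: "transpose (A ** Y) = A ** Y"
    and Y4: "transpose (Y ** A) = Y ** A"
  shows "X = Y"
proof -
  have tA1: "transpose A = transpose A ** (A ** Y)"
  proof -
    have "transpose A = transpose (A ** Y ** A)" by (simp only: Y1)
    also have "\<dots> = transpose A ** transpose (A ** Y)" by (rule matrix_transpose_mul)
    also have "\<dots> = transpose A ** (A ** Y)" by (simp only: Y3)
    finally show ?thesis .
  qed
  have tA2: "transpose A = (Y ** A) ** transpose A"
  proof -
    have "transpose A = transpose (A ** (Y ** A))" by (simp only: matrix_mul_assoc Y1)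
    also have "\<dots> = transpose (Y ** A) ** transpose A" by (rule matrix_transpose_mul)
    also have "\<dots> = (Y ** A) ** transpose A" by (simp only: Y4)
    finally show ?thesis .
  qed
  have AX: "A ** X = A ** Y"
  proof -
    have "A ** X = transpose (A ** X)" by (simp only: X3)
    also have "\<dots> = transpose X ** transpose A" by (rule matrix_transpose_mul)
    also have "\<dots> = transpose X ** (transpose A ** (A ** Y))"
      by (rule arg_cong[OF tA1, of "(**) (transpose X)"])
    also have "\<dots> = (transpose X ** transpose A) ** (A ** Y)" by (rule matrix_mul_assoc)
    also have "\<dots> = (A ** X) ** (A ** Y)" by (simp only: matrix_transpose_mul[symmetric] X3)
    also have "\<dots> = ((A ** X) ** A) ** Y" by (rule matrix_mul_assoc)
    also have "\<dots> = A ** Y" by (simp only: X1)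
    finally show ?thesis .
  qed
  have XA: "X ** A = Y ** A"
  proof -
    have "X ** A = transpose (X ** A)" by (simp only: X4)
    also have "\<dots> = transpose A ** transpose X" by (rule matrix_transpose_mul)
    also have "\<dots> = ((Y ** A) ** transpose A) ** transpose X"
      by (rule arg_cong[OF tA2, of "\<lambda>M. M ** transpose X"])
    also have "\<dots> = (Y ** A) ** (transpose A ** transpose X)" by (rule matrix_mul_assoc[symmetric])
    also have "\<dots> = (Y ** A) ** (X ** A)" by (simp only: matrix_transpose_mul[symmetric] X4)
    also have "\<dots> = Y ** (A ** X ** A)" by (simp only: matrix_mul_assoc)
    also have "\<dots> = Y ** A" by (simp only: X1)
    finally show ?thesis .
  qed
  have "X = X ** A ** X" by (simp only: X2)
  also have "\<dots> = X ** (A ** Y)" by (simp only: matrix_mul_assoc[symmetric] AX)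
  also have "\<dots> = Y ** A ** Y" by (simp only: matrix_mul_assoc XA)
  also have "\<dots> = Y" by (simp only: Y2)
  finally show ?thesis .
qed

lemma mp_exists:
  fixes A :: "real^'d^'m"
  shows "\<exists>X. A ** X ** A = A \<and> X ** A ** X = X \<and> transpose (A ** X) = A ** X \<and> transpose (X ** A) = X ** A"
proof -
  define Sc where "Sc = range (\<lambda>x. A *v x)"
  define Sr where "Sr = range (\<lambda>y. transpose A *v y)"
  have spc: "span Sc = Sc" unfolding Sc_def
    by (simp add: span_eq_iff subspace_UNIV linear_subspace_image)
  have null: "A *v x = 0" if "\<And>w. w \<in> span Sr \<Longrightarrow> x \<bullet> w = 0" for x
  proof -
    have "(A *v x) \<bullet> (A *v x) = x \<bullet> (transpose A *v (A *v x))"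
      by (simp add: dot_lmul_matrix inner_commute[of x])
    also have "\<dots> = 0" using that[of "transpose A *v (A *v x)"] by (simp add: Sr_def span_base)
    finally show ?thesis by simp
  qed
  have Apr: "A *v orthp Sr x = A *v x" for x
  proof -
    have "A *v (x - orthp Sr x) = 0" by (rule null) (rule orthp_orth)
    then show ?thesis by (simp add: matrix_vector_mult_diff_distrib)
  qed
  have K: "orthp Sr x1 = orthp Sr x2" if "A *v x1 = A *v x2" for x1 x2
  proof -
    have "orthp Sr (x1 - x2) = 0"
    proof (rule orthp_unique)
      show "0 \<in> span Sr" by (rule span_zero)
      fix w assume w: "w \<in> span Sr"
      have "orthogonal (x1 - x2) w"
      proof (rule orthogonal_to_span[OF w])
        fix y assume "y \<in> Sr"
        then obtain z where z: "y = transpose A *v z" unfolding Sr_def by auto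
        have "(x1 - x2) \<bullet> y = z \<bullet> (A *v (x1 - x2))"
          unfolding z by (simp add: dot_lmul_matrix inner_commute[of "x1 - x2"])
        also have "\<dots> = 0" using that by (simp add: matrix_vector_mult_diff_distrib)
        finally show "orthogonal (x1 - x2) y" by (simp add: orthogonal_def)
      qed
      then show "(x1 - x2 - 0) \<bullet> w = 0" by (simp add: orthogonal_def)
    qed
    then show ?thesis using linear_diff[OF orthp_linear, of Sr x1 x2] by simp
  qed
  define xsel where "xsel y = (SOME x. A *v x = orthp Sc y)" for y
  have Asel: "A *v xsel y = orthp Sc y" for y
  proof -
    have "orthp Sc y \<in> Sc" using orthp_span[of Sc y] spc by simp
    then have "\<exists>x. A *v x = orthp Sc y" unfolding Sc_def by auto
    then show ?thesis unfolding xsel_def by (rule someI_ex)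
  qed
  define X0 where "X0 y = orthp Sr (xsel y)" for y
  have linSc: "linear (orthp Sc)" and linSr: "linear (orthp Sr)" by (rule orthp_linear)+
  have linX0: "linear X0"
  proof (rule linearI)
    fix y z
    have "A *v (xsel y + xsel z) = A *v xsel (y + z)"
      by (simp add: Asel matrix_vector_right_distrib linear_add[OF linSc])
    then have "orthp Sr (xsel (y + z)) = orthp Sr (xsel y + xsel z)" by (intro K) simp
    then show "X0 (y + z) = X0 y + X0 z" unfolding X0_def
      by (simp add: linear_add[OF linSr])
  next
    fix c y
    have "A *v (c *\<^sub>R xsel y) = A *v xsel (c *\<^sub>R y)"
      by (simp add: Asel matrix_vector_mult_scaleR linear_scale[OF linSc])
    then have "orthp Sr (xsel (c *\<^sub>R y)) = orthp Sr (c *\<^sub>R xsel y)" by (intro K) simp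
    then show "X0 (c *\<^sub>R y) = c *\<^sub>R X0 y" unfolding X0_def
      by (simp add: linear_scale[OF linSr])
  qed
  define Xm where "Xm = matrix X0"
  have Xm: "Xm *v y = X0 y" for y
    unfolding Xm_def using fun_cong[OF matrix_vector_mul(2)[OF linX0]] by simp
  have inSc: "A *v x \<in> span Sc" for x unfolding Sc_def by (rule span_base) simp
  have c1: "A ** Xm ** A = A"
    by (simp add: matrix_eq matrix_vector_mul_assoc[symmetric] Xm X0_def Apr Asel orthp_id[OF inSc])
  have c2: "Xm ** A ** Xm = Xm"
  proof -
    have "X0 (A *v X0 y) = X0 y" for y
    proof -
      have "A *v xsel (orthp Sc y) = A *v xsel y"
        by (simp add: Asel orthp_id[OF orthp_span])
      then have "orthp Sr (xsel (orthp Sc y)) = orthp Sr (xsel y)" by (rule K)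
      then show ?thesis unfolding X0_def Apr Asel .
    qed
    then show ?thesis
      by (simp add: matrix_eq matrix_vector_mul_assoc[symmetric] Xm)
  qed
  have AXm: "(A ** Xm) *v y = orthp Sc y" for y
    by (simp add: matrix_vector_mul_assoc[symmetric] Xm X0_def Apr Asel)
  have XmA: "(Xm ** A) *v x = orthp Sr x" for x
  proof -
    have "A *v xsel (A *v x) = A *v x" by (simp add: Asel orthp_id[OF inSc])
    then have "orthp Sr (xsel (A *v x)) = orthp Sr x" by (rule K)
    then show ?thesis
      by (simp add: matrix_vector_mul_assoc[symmetric] Xm X0_def)
  qed
  have c3: "transpose (A ** Xm) = A ** Xm"
    by (rule sym_matrix) (simp add: AXm orthp_sa)
  have c4: "transpose (Xm ** A) = Xm ** A"
    by (rule sym_matrix) (simp add: XmA orthp_sa)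
  show ?thesis by (intro exI[of _ Xm] conjI c1 c2 c3 c4)
qed

lemma pinv_props:
  fixes A :: "real^'d^'m"
  shows "A ** pinv A ** A = A \<and> pinv A ** A ** pinv A = pinv A \<and>
    transpose (A ** pinv A) = A ** pinv A \<and> transpose (pinv A ** A) = pinv A ** A"
proof -
  obtain X where X: "A ** X ** A = A \<and> X ** A ** X = X \<and> transpose (A ** X) = A ** X \<and> transpose (X ** A) = X ** A"
    using mp_exists by blast
  show ?thesis unfolding pinv_def
  proof (rule theI[of _ X])
    show "A ** X ** A = A \<and> X ** A ** X = X \<and> transpose (A ** X) = A ** X \<and> transpose (X ** A) = X ** A"
      by (rule X)
    fix Y assume "A ** Y ** A = A \<and> Y ** A ** Y = Y \<and> transpose (A ** Y) = A ** Y \<and> transpose (Y ** A) = Y ** A"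
    then show "Y = X" using X mp_unique[of A Y X] by simp
  qed
qed

lemma projA_sym: "transpose (projA A) = projA A"
  using pinv_props[of A] unfolding projA_def by blast

lemma projA_idem: "projA A ** projA A = projA A"
  using pinv_props[of A] unfolding projA_def by (simp add: matrix_mul_assoc)

lemma projA_sa: "(projA A *v x) \<bullet> y = x \<bullet> (projA A *v y)"
proof -
  have e: "y v* projA A = projA A *v y"
    by (simp only: transpose_matrix_vector[symmetric] projA_sym)
  have "(y v* projA A) \<bullet> x = y \<bullet> (projA A *v x)" by (rule dot_lmul_matrix)
  then show ?thesis unfolding e by (simp add: inner_commute)
qed

lemma projA_idem_v: "projA A *v (projA A *v x) = projA A *v x"
  by (simp add: matrix_vector_mul_assoc projA_idem)

lemma sqnormA_alt: "sqnormA A u = (projA A *v u) \<bullet> (projA A *v u)"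
  unfolding sqnormA_def by (simp add: projA_sa projA_idem_v)

lemma sqnormA_nonneg: "sqnormA A u \<ge> 0"
  by (simp add: sqnormA_alt)

lemma inner_sq_add: "(a + d) \<bullet> (a + d) = a \<bullet> a + 2 * (a \<bullet> d) + d \<bullet> (d::'a::real_inner)"
  by (simp add: inner_add_left inner_add_right inner_commute)

lemma sqnormA_le: "sqnormA A u \<le> norm u ^ 2"
proof -
  let ?P = "projA A"
  have o: "(?P *v u) \<bullet> (u - ?P *v u) = 0"
    by (simp add: inner_diff_right sqnormA_alt[symmetric] sqnormA_def inner_commute)
  have "norm u ^ 2 = (?P *v u + (u - ?P *v u)) \<bullet> (?P *v u + (u - ?P *v u))"
    by (simp add: power2_norm_eq_inner)
  also have "\<dots> = sqnormA A u + (u - ?P *v u) \<bullet> (u - ?P *v u)"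
    unfolding inner_sq_add o sqnormA_alt by simp
  finally show ?thesis by simp
qed

lemma sqnormA_add: "sqnormA A (a + b) = sqnormA A a + 2 * (a \<bullet> (projA A *v b)) + sqnormA A b"
  using projA_sa[of A b a] unfolding sqnormA_def
  by (simp add: inner_add_left inner_add_right matrix_vector_right_distrib projA_sa[of A b a] inner_commute)

lemma sqnormA_scale: "sqnormA A (c *\<^sub>R a) = c^2 * sqnormA A a"
  unfolding sqnormA_def by (simp add: matrix_vector_mult_scaleR power2_eq_square)

lemma Rcoef_nonneg: "Rcoef A i \<ge> 0"
  using sqnormA_nonneg[of A "axis i 1"] by (simp add: Rcoef_def sqnormA_def)

lemma Rcoef_one: assumes "Rcoef A i = 1" shows "projA A *v axis i 1 = axis i 1"
proof -
  let ?P = "projA A" and ?e = "axis i (1::real)"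
  have "(?e - ?P *v ?e) \<bullet> (?e - ?P *v ?e) = ?e \<bullet> ?e - 2 * (?e \<bullet> (?P *v ?e)) + sqnormA A ?e"
    by (simp add: inner_diff_left inner_diff_right sqnormA_alt inner_commute)
  also have "\<dots> = 0" using assms by (simp add: Rcoef_def sqnormA_def inner_axis_axis)
  finally show ?thesis by simp
qed

lemma cvx:
  fixes g :: "real \<Rightarrow> real"
  assumes "convex_on UNIV g" "0 \<le> t" "t \<le> 1"
  shows "g ((1 - t) * a + t * b) \<le> (1 - t) * g a + t * g b"
  using convex_onD[OF assms(1) assms(2,3), of a b] by simp

lemma three_point:
  fixes g :: "real \<Rightarrow> real"
  assumes cv: "convex_on UNIV g" and ab: "a < b" and bc: "b < c"
  shows "(c - a) * g b \<le> (c - b) * g a + (b - a) * g c"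
proof -
  define t where "t = (b - a) / (c - a)"
  have t0: "0 \<le> t" and t1: "t \<le> 1" using ab bc by (auto simp: t_def field_simps)
  have ca: "c - a \<noteq> 0" using ab bc by simp
  have tc: "t * (c - a) = b - a" using ca by (simp add: t_def)
  have bt: "(1 - t) * a + t * c = b"
  proof -
    have "(1 - t) * a + t * c = a + t * (c - a)" by (simp add: algebra_simps)
    then show ?thesis using tc by simp
  qed
  have "g b \<le> (1 - t) * g a + t * g c" using cvx[OF cv t0 t1, of a c] bt by simp
  then have "(c - a) * g b \<le> (c - a) * ((1 - t) * g a + t * g c)"
    using ab bc by (intro mult_left_mono) auto
  also have "\<dots> = (c - a - t * (c - a)) * g a + (t * (c - a)) * g c"
    by (simp add: algebra_simps)
  also have "\<dots> = (c - b) * g a + (b - a) * g c"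
    unfolding tc by simp
  finally show ?thesis .
qed

lemma prox_min_exists:
  fixes g :: "real \<Rightarrow> real"
  assumes cv: "convex_on UNIV g" and eta: "eta > 0"
  shows "\<exists>u. \<forall>v. 1/(2*eta) * (u - z)^2 + g u \<le> 1/(2*eta) * (v - z)^2 + g v"
proof -
  define phi where "phi v = 1/(2*eta) * (v - z)^2 + g v" for v
  define c where "c = \<bar>g z - g (z - 1)\<bar> + \<bar>g (z + 1) - g z\<bar>"
  define K where "K = 1 + 2 * eta * c"
  have c0: "c \<ge> 0" by (simp add: c_def)
  have K1: "K \<ge> 1" using c0 eta by (simp add: K_def)
  have gcont: "continuous_on UNIV g" by (rule convex_on_continuous[OF open_UNIV cv])
  have pcont: "continuous_on {z - K..z + K} phi"
    unfolding phi_def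
    by (intro continuous_intros continuous_on_subset[OF gcont]) auto
  obtain u where u: "u \<in> {z - K..z + K}" and umin: "\<And>y. y \<in> {z - K..z + K} \<Longrightarrow> phi u \<le> phi y"
    using continuous_attains_inf[OF compact_Icc _ pcont] K1 by fastforce
  have far: "phi v \<ge> phi z" if v: "\<bar>v - z\<bar> \<ge> K" for v
  proof -
    have lb: "g v \<ge> g z - c * \<bar>v - z\<bar>"
    proof (cases "v \<ge> z")
      case True
      then have vz: "v > z" using v K1 by auto
      have "(v - (z - 1)) * g z \<le> (v - z) * g (z - 1) + (z - (z - 1)) * g v"
        by (rule three_point[OF cv]) (use vz in auto)
      then have "g v \<ge> g z + (v - z) * (g z - g (z - 1))" by (simp add: algebra_simps)
      moreover have "(v - z) * (g z - g (z - 1)) \<ge> - (c * \<bar>v - z\<bar>)"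
      proof -
        have "(v - z) * (- (g z - g (z - 1))) \<le> (v - z) * \<bar>g z - g (z - 1)\<bar>"
          using vz by (intro mult_left_mono) auto
        moreover have "(v - z) * (- (g z - g (z - 1))) = - ((v - z) * (g z - g (z - 1)))" by (simp add: algebra_simps)
        ultimately have "(v - z) * (g z - g (z - 1)) \<ge> - ((v - z) * \<bar>g z - g (z - 1)\<bar>)"
          by linarith
        moreover have "(v - z) * \<bar>g z - g (z - 1)\<bar> \<le> c * \<bar>v - z\<bar>"
          using vz by (simp add: c_def mult.commute mult_left_mono)
        ultimately show ?thesis by linarith
      qed
      ultimately show ?thesis by linarith
    next
      case False
      then have vz: "v < z" by auto
      have "(z + 1 - v) * g z \<le> (z + 1 - z) * g v + (z - v) * g (z + 1)"
        by (rule three_point[OF cv]) (use vz in auto)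
      then have "g v \<ge> g z + (z - v) * (g z - g (z + 1))" by (simp add: algebra_simps)
      moreover have "(z - v) * (g z - g (z + 1)) \<ge> - (c * \<bar>v - z\<bar>)"
      proof -
        have "(z - v) * (g (z + 1) - g z) \<le> (z - v) * \<bar>g (z + 1) - g z\<bar>"
          using vz by (intro mult_left_mono) auto
        moreover have "(z - v) * (g z - g (z + 1)) = - ((z - v) * (g (z + 1) - g z))" by (simp add: algebra_simps)
        ultimately have "(z - v) * (g z - g (z + 1)) \<ge> - ((z - v) * \<bar>g (z + 1) - g z\<bar>)"
          by linarith
        moreover have "(z - v) * \<bar>g (z + 1) - g z\<bar> \<le> c * \<bar>v - z\<bar>"
          using vz by (simp add: c_def mult.commute mult_left_mono)
        ultimately show ?thesis by linarith
      qed
      ultimately show ?thesis by linarith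
    qed
    have "c * \<bar>v - z\<bar> \<le> 1/(2*eta) * (v - z)^2"
    proof -
      have "2 * eta * c \<le> \<bar>v - z\<bar>" using v K_def by simp
      then have "(2 * eta * c) * \<bar>v - z\<bar> \<le> \<bar>v - z\<bar> * \<bar>v - z\<bar>"
        by (intro mult_right_mono) auto
      then have "c * \<bar>v - z\<bar> \<le> (v - z)^2 / (2 * eta)"
        using eta by (simp add: field_simps power2_eq_square abs_mult_self_eq)
      then show ?thesis by simp
    qed
    then show ?thesis using lb by (simp add: phi_def)
  qed
  have "phi u \<le> phi v" for v
  proof (cases "\<bar>v - z\<bar> \<ge> K")
    case True
    have "phi u \<le> phi z" using umin K1 by simp
    then show ?thesis using far[OF True] by simp
  next
    case False
    then have "z - K \<le> v \<and> v \<le> z + K" by (auto simp: abs_le_iff)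
    then show ?thesis using umin by auto
  qed
  then show ?thesis unfolding phi_def by blast
qed

lemma prox_min_opt:
  fixes g :: "real \<Rightarrow> real"
  assumes cv: "convex_on UNIV g" and eta: "eta > 0"
    and umin: "\<forall>v. 1/(2*eta) * (u - z)^2 + g u \<le> 1/(2*eta) * (v - z)^2 + g v"
  shows "g t \<ge> g u - (t - u) * (u - z) / eta"
proof -
  define d where "d = t - u"
  define D where "D = d * (u - z) / eta + g t - g u"
  define q where "q = d^2 / (2 * eta)"
  have key: "0 \<le> D + s * q" if s0: "0 < s" and s1: "s \<le> 1" for s
  proof -
    have "1/(2*eta) * (u - z)^2 + g u \<le> 1/(2*eta) * ((1 - s) * u + s * t - z)^2 + g ((1 - s) * u + s * t)"
      using umin by blast
    also have "g ((1 - s) * u + s * t) \<le> (1 - s) * g u + s * g t"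
      using cvx[OF cv, of s u t] s0 s1 by simp
    finally have ineq: "1/(2*eta) * (u - z)^2 + g u \<le> 1/(2*eta) * ((1 - s) * u + s * t - z)^2 + ((1 - s) * g u + s * g t)"
      by simp
    have sq: "((1 - s) * u + s * t - z)^2 = (u - z)^2 + (2 * s * d * (u - z) + s^2 * d^2)"
      by (simp add: d_def power2_eq_square algebra_simps)
    have gs: "(1 - s) * g u = g u - s * g u" by (simp add: algebra_simps)
    have "0 \<le> 1/(2*eta) * (2 * s * d * (u - z) + s^2 * d^2) + s * (g t - g u)"
      using ineq unfolding sq gs distrib_left right_diff_distrib by linarith
    also have "\<dots> = s * (D + s * q)"
      using eta by (simp add: D_def q_def field_simps power2_eq_square)
    finally show ?thesis using s0 by (simp add: zero_le_mult_iff)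
  qed
  have q0: "q \<ge> 0" using eta by (simp add: q_def)
  have "D \<ge> 0"
  proof (rule ccontr)
    assume "\<not> D \<ge> 0"
    then have Dn: "D < 0" by simp
    show False
    proof (cases "q = 0")
      case True
      then show ?thesis using key[of 1] Dn by simp
    next
      case False
      then have qp: "q > 0" using q0 by simp
      define s where "s = min 1 (- D / (2 * q))"
      have "- D / (2 * q) > 0" using Dn qp by (intro divide_pos_pos) auto
      then have s0: "s > 0" by (simp add: s_def)
      have s1: "s \<le> 1" by (simp add: s_def)
      have "s * q \<le> (- D / (2 * q)) * q" using qp by (intro mult_right_mono) (auto simp: s_def)
      also have "\<dots> = - D / 2" using qp by simp
      finally show False using key[OF s0 s1] Dn by linarith
    qed
  qed
  then show ?thesis by (simp add: D_def d_def)
qed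

lemma prox_opt:
  fixes g :: "real \<Rightarrow> real"
  assumes cv: "convex_on UNIV g" and eta: "eta > 0"
  shows "g t \<ge> g (prox eta g z) - (t - prox eta g z) * (prox eta g z - z) / eta"
proof -
  obtain u where u: "\<forall>v. 1/(2*eta) * (u - z)^2 + g u \<le> 1/(2*eta) * (v - z)^2 + g v"
    using prox_min_exists[OF cv eta] by blast
  have "prox eta g z = u"
    unfolding prox_def
  proof (rule the_equality)
    show "\<forall>v. 1/(2*eta) * (u - z)^2 + g u \<le> 1/(2*eta) * (v - z)^2 + g v" by (rule u)
    fix w assume w: "\<forall>v. 1/(2*eta) * (w - z)^2 + g w \<le> 1/(2*eta) * (v - z)^2 + g v"
    have 1: "g w \<ge> g u - (w - u) * (u - z) / eta" by (rule prox_min_opt[OF cv eta u])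
    have 2: "g u \<ge> g w - (u - w) * (w - z) / eta" by (rule prox_min_opt[OF cv eta w])
    define a1 where "a1 = (w - u) * (u - z) / eta"
    define a2 where "a2 = (w - u) * (w - z) / eta"
    have 1: "g w \<ge> g u - a1" unfolding a1_def by (rule prox_min_opt[OF cv eta u])
    have e2: "(u - w) * (w - z) = - ((w - u) * (w - z))" by (simp add: algebra_simps)
    have 2: "g u \<ge> g w + a2"
      using prox_min_opt[OF cv eta w, of u] unfolding a2_def e2 by simp
    have e: "(w - u) * (w - u) = (w - u) * (w - z) - (w - u) * (u - z)" by (simp add: algebra_simps)
    have e3: "(w - u) * (w - u) / eta = a2 - a1"
      unfolding e a1_def a2_def by (rule diff_divide_distrib)
    have "(w - u) * (w - u) / eta \<le> 0" unfolding e3 using 1 2 by linarith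
    then have "(w - u) * (w - u) \<le> 0" using eta by (simp add: divide_le_0_iff)
    then have "(w - u) * (w - u) = 0" by (metis antisym zero_le_square)
    then show "w = u" by simp
  qed
  then show ?thesis using prox_min_opt[OF cv eta u] by simp
qed

lemma prox_zero:
  assumes eta: "eta > 0"
  shows "prox eta (\<lambda>_. 0) z = z"
proof -
  have cv: "convex_on UNIV (\<lambda>_::real. 0::real)" by (simp add: convex_on_const)
  define p where "p = prox eta (\<lambda>_. 0) z"
  have "0 \<ge> 0 - (z - p) * (p - z) / eta"
    using prox_opt[OF cv eta, of z z] by (simp add: p_def)
  moreover have "(z - p) * (p - z) / eta = - ((p - z) * (p - z) / eta)"
  proof -
    have e2: "(z - p) * (p - z) = - ((p - z) * (p - z))" by (simp add: algebra_simps)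
    show ?thesis unfolding e2 by simp
  qed
  ultimately have "(p - z) * (p - z) / eta \<le> 0" by linarith
  then have "(p - z) * (p - z) \<le> 0"
    using eta by (simp add: divide_le_0_iff)
  then have "(p - z) * (p - z) = 0" by (metis antisym zero_le_square)
  then have "p = z" by simp
  then show ?thesis by (simp add: p_def)
qed

lemma line_deriv:
  fixes f :: "real^'d \<Rightarrow> real"
  assumes diff: "\<forall>x. (f has_derivative (\<lambda>h. gradf x \<bullet> h)) (at x)"
  shows "((\<lambda>s. f (y + s *\<^sub>R axis i 1)) has_real_derivative (gradf (y + s *\<^sub>R axis i 1) $ i)) (at s)"
proof -
  have g: "((\<lambda>s. y + s *\<^sub>R axis i (1::real)) has_derivative (\<lambda>h. h *\<^sub>R axis i 1)) (at s)"
    by (auto intro!: derivative_eq_intros)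
  have "((\<lambda>s. f (y + s *\<^sub>R axis i 1)) has_derivative (\<lambda>h. gradf (y + s *\<^sub>R axis i 1) \<bullet> (h *\<^sub>R axis i 1))) (at s)"
    using has_derivative_compose[OF g diff[rule_format]] by (simp add: o_def)
  moreover have "(\<lambda>h. gradf (y + s *\<^sub>R axis i 1) \<bullet> (h *\<^sub>R axis i 1)) = (*) (gradf (y + s *\<^sub>R axis i 1) $ i)"
    by (rule ext) (simp add: inner_axis)
  ultimately show ?thesis by (simp add: has_field_derivative_def)
qed

lemma smooth_ub:
  fixes f :: "real^'d \<Rightarrow> real"
  assumes diff: "\<forall>x. (f has_derivative (\<lambda>h. gradf x \<bullet> h)) (at x)"
    and smooth: "\<forall>i x h. \<bar>gradf (x + h *\<^sub>R axis i 1) $ i - gradf x $ i\<bar> \<le> M i * \<bar>h\<bar>"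
  shows "f (y + h *\<^sub>R axis i 1) \<le> f y + h * gradf y $ i + M i / 2 * h^2"
proof -
  define phi where "phi s = f (y + s *\<^sub>R axis i 1) - s * gradf y $ i - M i / 2 * s^2" for s
  define dphi where "dphi s = gradf (y + s *\<^sub>R axis i 1) $ i - gradf y $ i - M i * s" for s
  have der: "DERIV phi s :> dphi s" for s
    unfolding phi_def dphi_def
    by (rule derivative_eq_intros line_deriv[OF diff] | simp)+
  have sm: "\<bar>gradf (y + s *\<^sub>R axis i 1) $ i - gradf y $ i\<bar> \<le> M i * \<bar>s\<bar>" for s
    using smooth by blast
  have "phi h \<le> phi 0"
  proof (cases h "0::real" rule: linorder_cases)
    case less
    obtain z where z: "h < z" "z < 0" "phi 0 - phi h = (0 - h) * dphi z"
      using MVT2[OF less, of phi dphi] der by blast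
    have "dphi z \<ge> 0" using sm[of z] z by (simp add: dphi_def abs_le_iff)
    then have "(0 - h) * dphi z \<ge> 0" using less by (intro mult_nonneg_nonneg) auto
    then show ?thesis using z by linarith
  next
    case equal then show ?thesis by simp
  next
    case greater
    obtain z where z: "0 < z" "z < h" "phi h - phi 0 = (h - 0) * dphi z"
      using MVT2[OF greater, of phi dphi] der by blast
    have "dphi z \<le> 0" using sm[of z] z by (simp add: dphi_def abs_le_iff)
    then have "(h - 0) * dphi z \<le> 0" using greater by (intro mult_nonneg_nonpos) auto
    then show ?thesis using z by linarith
  qed
  then show ?thesis by (simp add: phi_def)
qed

lemma sigmaR_le_M:
  fixes A :: "real^'d::finite^'m::finite" and f :: "real^'d \<Rightarrow> real" and sigma :: real
  assumes diff: "\<forall>x. (f has_derivative (\<lambda>h. gradf x \<bullet> h)) (at x)"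
    and rel_sc: "\<forall>x y. f x - f y \<ge> gradf y \<bullet> (projA A *v (x - y)) + sigma / 2 * sqnormA A (x - y)"
    and smooth: "\<forall>i x h. \<bar>gradf (x + h *\<^sub>R axis i 1) $ i - gradf x $ i\<bar> \<le> M i * \<bar>h\<bar>"
  shows "sigma * Rcoef A i \<le> M i"
proof (rule ccontr)
  assume "\<not> sigma * Rcoef A i \<le> M i"
  then have k: "(sigma * Rcoef A i - M i) / 2 > 0" by simp
  define k where "k = (sigma * Rcoef A i - M i) / 2"
  define e where "e = axis i (1::real)"
  define c where "c = gradf 0 \<bullet> (projA A *v e) - gradf 0 $ i"
  have ineq: "h * c + h^2 * k \<le> 0" for h
  proof -
    have 1: "f (h *\<^sub>R e) - f 0 \<ge> gradf 0 \<bullet> (projA A *v (h *\<^sub>R e)) + sigma / 2 * sqnormA A (h *\<^sub>R e)"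
      using spec[OF spec[OF rel_sc, of "h *\<^sub>R e"], of 0] by simp
    have 2: "f (0 + h *\<^sub>R e) \<le> f 0 + h * gradf 0 $ i + M i / 2 * h^2"
      unfolding e_def by (rule smooth_ub[OF diff smooth])
    have 3: "sqnormA A (h *\<^sub>R e) = h^2 * Rcoef A i"
      unfolding sqnormA_scale by (simp add: Rcoef_def sqnormA_def e_def)
    have 4: "gradf 0 \<bullet> (projA A *v (h *\<^sub>R e)) = h * (gradf 0 \<bullet> (projA A *v e))"
      by (simp add: matrix_vector_mult_scaleR)
    have "h * c + h^2 * k = (h * (gradf 0 \<bullet> (projA A *v e)) + sigma / 2 * (h^2 * Rcoef A i))
       - (h * gradf 0 $ i + M i / 2 * h^2)"
      by (simp add: c_def k_def field_simps)
    also have "\<dots> \<le> 0" using 1 2 3 4 by simp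
    finally show ?thesis .
  qed
  define h where "h = (\<bar>c\<bar> + 1) / k"
  have hp: "h > 0" using k by (simp add: h_def k_def add_pos_nonneg)
  have hk: "h * k = \<bar>c\<bar> + 1" using k by (simp add: h_def k_def)
  have "h * (c + h * k) \<le> 0" using ineq[of h] by (simp add: power2_eq_square algebra_simps)
  then have "c + h * k \<le> 0" using hp by (meson not_le mult_pos_pos)
  then show False using hk abs_ge_minus_self[of c] by linarith
qed

lemma part1:
  fixes A :: "real^'d::finite^'m::finite" and sigma :: real
  assumes sR: "sigma * Rcoef A i \<le> M i" and pp: "p i > 0" and sp: "sigma > 0" and Sp: "S > 0"
    and Sb: "S^2 \<ge> M i * Rcoef A i / (p i)^2"
  shows "sqrt sigma / S * Rcoef A i \<le> p i"
proof -
  have R0: "Rcoef A i \<ge> 0" by (rule Rcoef_nonneg)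
  have "sigma * (Rcoef A i)^2 \<le> M i * Rcoef A i"
    using mult_right_mono[OF sR R0] by (simp add: power2_eq_square mult.assoc)
  also have "\<dots> \<le> S^2 * (p i)^2" using Sb pp by (simp add: pos_divide_le_eq)
  finally have a: "sigma * (Rcoef A i)^2 \<le> S^2 * (p i)^2" .
  have "(sqrt sigma / S * Rcoef A i)^2 = sigma * (Rcoef A i)^2 / S^2"
    using sp by (simp add: power_mult_distrib power_divide)
  also have "\<dots> \<le> (p i)^2" using a Sp by (simp add: pos_divide_le_eq mult.commute)
  finally have "(sqrt sigma / S * Rcoef A i)^2 \<le> (p i)^2" .
  then show ?thesis by (rule power2_le_imp_le) (use pp in auto)
qed

locale apcg_loc =
  fixes A :: "real^'d::finite^'m::finite"
    and f :: "real^'d \<Rightarrow> real" and gradf :: "real^'d \<Rightarrow> real^'d"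
    and psi :: "'d \<Rightarrow> real \<Rightarrow> real"
    and p M :: "'d \<Rightarrow> real"
    and sigma S :: real and theta :: "real^'d"
  assumes diff: "\<forall>x. (f has_derivative (\<lambda>h. gradf x \<bullet> h)) (at x)"
    and rel_sc: "\<forall>x y. f x - f y \<ge> gradf y \<bullet> (projA A *v (x - y)) + sigma / 2 * sqnormA A (x - y)"
    and smooth: "\<forall>i x h. \<bar>gradf (x + h *\<^sub>R axis i 1) $ i - gradf x $ i\<bar> \<le> M i * \<bar>h\<bar>"
    and psi_convex: "\<forall>i. convex_on UNIV (psi i)"
    and R_or_zero: "\<forall>i. Rcoef A i = 1 \<or> psi i = (\<lambda>_. 0)"
    and p_pos: "\<forall>i. p i > 0"
    and p_sum: "(\<Sum>i\<in>UNIV. p i) = 1"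
    and minimizer: "\<forall>x. Fobj f psi theta \<le> Fobj f psi x"
    and sigma_pos: "sigma > 0"
    and S_pos: "S > 0"
    and S_bound: "\<forall>i. S^2 \<ge> M i * Rcoef A i / (p i)^2"
    and rho_lt1: "sqrt sigma / S < 1"
begin

definition rho where "rho = sqrt sigma / S"

lemma rho_pos: "rho > 0" using sigma_pos S_pos by (simp add: rho_def)
lemma rho_less1: "rho < 1" using rho_lt1 by (simp add: rho_def)
lemma rho_sq: "rho^2 = sigma / S^2" using sigma_pos by (simp add: rho_def power_divide)

lemma pp: "p j > 0" using p_pos by blast

lemma p_le1: "p j \<le> 1"
proof -
  have "p j \<le> (\<Sum>i\<in>UNIV. p i)"
    by (rule member_le_sum) (use p_pos in \<open>auto simp: less_imp_le\<close>)
  then show ?thesis using p_sum by simp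
qed

lemma sR: "sigma * Rcoef A i \<le> M i"
  by (rule sigmaR_le_M[OF diff rel_sc smooth])

lemma rhoR: "rho * Rcoef A i \<le> p i"
  unfolding rho_def by (rule part1[OF sR pp sigma_pos S_pos]) (use S_bound in blast)

lemma key_M: "M i * Rcoef A i * rho^2 \<le> sigma * (p i)^2"
proof -
  have "M i * Rcoef A i / (p i)^2 \<le> S^2" using S_bound by blast
  then have "M i * Rcoef A i \<le> S^2 * (p i)^2"
    using pp[of i] by (simp add: pos_divide_le_eq)
  then have "M i * Rcoef A i * sigma \<le> S^2 * (p i)^2 * sigma"
    using sigma_pos by (intro mult_right_mono) auto
  then have "M i * Rcoef A i * sigma / S^2 \<le> sigma * (p i)^2"
    using S_pos by (simp add: pos_divide_le_eq mult.commute mult.left_commute)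
  then show ?thesis by (simp add: rho_sq)
qed

lemma psi_nz_R: "psi j \<noteq> (\<lambda>_. 0) \<Longrightarrow> Rcoef A j = 1"
  using R_or_zero by blast

lemma psi_nz_rho: "psi j \<noteq> (\<lambda>_. 0) \<Longrightarrow> rho \<le> p j"
  using rhoR[of j] psi_nz_R by simp

definition yv where "yv x v = (1 / (1 + rho)) *\<^sub>R (x + rho *\<^sub>R v)"
definition wv where "wv x v = (1 - rho) *\<^sub>R v + rho *\<^sub>R yv x v"
definition eta where "eta i = rho / (sigma * p i)"
definition uu where "uu x v j = prox (eta j) (psi j) (wv x v $ j - eta j * gradf (yv x v) $ j)"
definition vnew where "vnew x v i = (\<chi> j. if j = i then uu x v i else wv x v $ j)"
definition xnew where "xnew x v i = yv x v + (rho * Rcoef A i / p i) *\<^sub>R (vnew x v i - wv x v)"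
definition kk where "kk j = (1 - rho^2 * inverse (p j)) * inverse (1 + rho)"
definition cc where "cc j = rho * (1 - inverse (p j)) * inverse (1 + rho)"
definition hnew where "hnew x v h i = (\<lambda>j. kk j * h j + cc j * psi j (v $ j) + rho / p j * psi j (vnew x v i $ j))"
definition mystep where "mystep i s = (case s of (x, v, h) \<Rightarrow> (xnew x v i, vnew x v i, hnew x v h i))"

fun myrun where
  "myrun s [] = s"
| "myrun s (i # is) = myrun (mystep i s) is"

definition Fstar where "Fstar = Fobj f psi theta"
definition Lf where "Lf s = (case s of (x, v, h) \<Rightarrow> sigma * sqnormA A (v - theta) + 2 * (f x + (\<Sum>j\<in>UNIV. h j) - Fstar))"
definition Inv where "Inv s = (case s of (x, v, h) \<Rightarrow> \<forall>j.
   (psi j = (\<lambda>_. 0) \<longrightarrow> h j = 0) \<and>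
   (psi j \<noteq> (\<lambda>_. 0) \<longrightarrow> (\<exists>Q H. psi j Q \<le> H \<and> x $ j - rho / p j * v $ j = (1 - rho / p j) * Q
        \<and> h j - rho / p j * psi j (v $ j) = (1 - rho / p j) * H)))"

lemma eta_pos: "eta i > 0" using rho_pos sigma_pos pp[of i] by (simp add: eta_def)

lemma yv_comp: "yv x v $ j = (x $ j + rho * v $ j) / (1 + rho)"
  by (simp add: yv_def)

lemma wv_comp: "wv x v $ j = (v $ j + rho * x $ j) / (1 + rho)"
proof -
  have r3: "1 + rho \<noteq> 0" using rho_pos by simp
  have "wv x v $ j = ((1 - rho) * (1 + rho) * v $ j + rho * (x $ j + rho * v $ j)) / (1 + rho)"
    using r3 by (simp add: wv_def yv_def add_divide_distrib)
  also have "\<dots> = (v $ j + rho * x $ j) / (1 + rho)"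
    by (simp add: algebra_simps)
  finally show ?thesis .
qed

lemma step_eq:
  "apcg_step A gradf psi p (\<lambda>_. rho) (\<lambda>_. rho) (\<lambda>k. inverse ((1 - rho) ^ k))
     (\<lambda>k. sigma * inverse ((1 - rho) ^ k)) t i (x, v) = (xnew x v i, vnew x v i)"
proof -
  have r1: "1 - rho \<noteq> 0" and r3: "1 + rho \<noteq> 0"
    using rho_pos rho_less1 by auto
  have "rho * rho < rho * 1" by (rule mult_strict_left_mono[OF rho_less1 rho_pos])
  then have r2: "1 - rho * rho \<noteq> 0" using rho_less1 by simp
  have y: "(1 / (1 - rho * rho)) *\<^sub>R ((1 - rho) *\<^sub>R x + (rho * (1 - rho)) *\<^sub>R v) = yv x v"
  proof -
    have fac: "1 - rho * rho = (1 - rho) * (1 + rho)" by (simp add: algebra_simps)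
    have "((1 - rho) * x $ j + rho * (1 - rho) * v $ j) / (1 - rho * rho) = (x $ j + rho * v $ j) / (1 + rho)" for j
    proof -
      have "(1 - rho) * x $ j + rho * (1 - rho) * v $ j = (1 - rho) * (x $ j + rho * v $ j)"
        by (simp add: algebra_simps)
      then show ?thesis unfolding fac using mult_divide_mult_cancel_left[OF r1] by simp
    qed
    then show ?thesis by (simp add: vec_eq_iff yv_def)
  qed
  have e: "(inverse ((1 - rho) ^ Suc t) - inverse ((1 - rho) ^ t)) /
      (sigma * inverse ((1 - rho) ^ Suc t) * p i) = eta i"
  proof -
    have a: "(1 - rho) ^ t \<noteq> 0" using r1 by simp
    show ?thesis using a r1 sigma_pos pp[of i]
      by (simp add: eta_def field_simps)
  qed
  show ?thesis
    unfolding apcg_step_def Let_def fst_conv snd_conv y e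
    by (simp add: xnew_def vnew_def uu_def wv_def coord_grad_def vec_eq_iff axis_def)
qed

lemma run_eq:
  "apcg_run A gradf psi p (\<lambda>_. rho) (\<lambda>_. rho) (\<lambda>k. inverse ((1 - rho) ^ k))
     (\<lambda>k. sigma * inverse ((1 - rho) ^ k)) t (x, v) is = (fst (myrun (x, v, h) is), fst (snd (myrun (x, v, h) is)))"
proof (induction "is" arbitrary: t x v h)
  case Nil
  then show ?case by simp
next
  case (Cons i "is")
  show ?case by (simp add: step_eq mystep_def Cons.IH)
qed

end

lemma combine:
  fixes g :: "real \<Rightarrow> real"
  assumes cv: "convex_on UNIV g" and a: "a \<ge> 0" and b: "b \<ge> 0" and ab: "a + b = m"
    and QH: "g Q \<le> H"
  shows "\<exists>Q' H'. g Q' \<le> H' \<and> a * v + b * Q = m * Q' \<and> a * g v + b * H = m * H'"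
proof (cases "m = 0")
  case True
  then have "a = 0" "b = 0" using a b ab by auto
  then show ?thesis using QH True by auto
next
  case False
  then have mp: "m > 0" using a b ab by auto
  define t where "t = b / m"
  have t0: "0 \<le> t" and t1: "t \<le> 1" using a b ab mp by (auto simp: t_def field_simps)
  have at: "1 - t = a / m" using ab mp by (simp add: t_def field_simps)
  have "g ((1 - t) * v + t * Q) \<le> (1 - t) * g v + t * g Q" by (rule cvx[OF cv t0 t1])
  also have "\<dots> \<le> (1 - t) * g v + t * H" using QH t0 by (simp add: mult_left_mono)
  finally have *: "g ((1 - t) * v + t * Q) \<le> (1 - t) * g v + t * H" .
  show ?thesis
  proof (intro exI conjI)
    show "g ((1 - t) * v + t * Q) \<le> (1 - t) * g v + t * H" by (rule *)
    have mt: "m * t = b" using mp by (simp add: t_def)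
    have m1t: "m * (1 - t) = a" using mt ab by (simp add: right_diff_distrib)
    show "a * v + b * Q = m * ((1 - t) * v + t * Q)"
      unfolding distrib_left mult.assoc[symmetric] mt m1t ..
    show "a * g v + b * H = m * ((1 - t) * g v + t * H)"
      unfolding distrib_left mult.assoc[symmetric] mt m1t ..
  qed
qed

context apcg_loc begin

lemma vnew_comp: "vnew x v i $ j = (if j = i then uu x v i else wv x v $ j)"
  by (simp add: vnew_def)

lemma yw_kk: "yv x v $ j - rho / p j * wv x v $ j = kk j * x $ j + cc j * v $ j"
  unfolding yv_comp wv_comp kk_def cc_def
  by (simp add: divide_inverse algebra_simps power2_eq_square)

lemma ip1: "p j * inverse (p j) = 1" using pp[of j] by simp
lemma iq1: "(1 + rho) * inverse (1 + rho) = 1" using rho_pos by simp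

lemma xnew_comp:
  assumes "psi j \<noteq> (\<lambda>_. 0)"
  shows "xnew x v i $ j = kk j * x $ j + cc j * v $ j + rho / p j * vnew x v i $ j"
proof -
  have "xnew x v i $ j = yv x v $ j + rho / p j * (vnew x v i $ j - wv x v $ j)"
  proof (cases "j = i")
    case True
    then show ?thesis using psi_nz_R[OF assms] by (simp add: xnew_def)
  next
    case False
    then show ?thesis by (simp add: xnew_def vnew_comp)
  qed
  also have "\<dots> = (yv x v $ j - rho / p j * wv x v $ j) + rho / p j * vnew x v i $ j"
    by (simp add: algebra_simps)
  finally show ?thesis unfolding yw_kk .
qed

lemma inv_psi:
  assumes "Inv (x, v, h)"
  shows "psi j (x $ j) \<le> h j"
proof (cases "psi j = (\<lambda>_. 0)")
  case True
  then show ?thesis using assms by (simp add: Inv_def)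
next
  case False
  have "\<forall>j. (psi j = (\<lambda>_. 0) \<longrightarrow> h j = 0) \<and>
   (psi j \<noteq> (\<lambda>_. 0) \<longrightarrow> (\<exists>Q H. psi j Q \<le> H \<and> x $ j - rho / p j * v $ j = (1 - rho / p j) * Q
        \<and> h j - rho / p j * psi j (v $ j) = (1 - rho / p j) * H))"
    using assms unfolding Inv_def prod.case .
  then obtain Q H where QH: "psi j Q \<le> H" "x $ j - rho / p j * v $ j = (1 - rho / p j) * Q"
     "h j - rho / p j * psi j (v $ j) = (1 - rho / p j) * H"
    using False by blast
  have r0: "0 \<le> 1 - rho / p j" and r1: "1 - rho / p j \<le> 1"
    using psi_nz_rho[OF False] pp[of j] rho_pos by (auto simp: field_simps)
  have xe: "x $ j = (1 - (1 - rho / p j)) * v $ j + (1 - rho / p j) * Q"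
    using QH(2) by (simp add: algebra_simps)
  have "psi j (x $ j) \<le> (1 - (1 - rho / p j)) * psi j (v $ j) + (1 - rho / p j) * psi j Q"
    unfolding xe by (rule cvx[OF psi_convex[rule_format] r0 r1])
  also have "\<dots> \<le> (1 - (1 - rho / p j)) * psi j (v $ j) + (1 - rho / p j) * H"
    using QH(1) r0 by (simp add: mult_left_mono)
  also have "\<dots> = h j" using QH(3) by (simp add: algebra_simps)
  finally show ?thesis .
qed

lemma inv_init: "Inv (0, 0, \<lambda>j. psi j 0)"
  unfolding Inv_def prod.case
proof (intro allI conjI impI)
  fix j
  show "psi j = (\<lambda>_. 0) \<Longrightarrow> psi j 0 = 0" by simp
  show "\<exists>Q H. psi j Q \<le> H \<and> (0::real^'d) $ j - rho / p j * (0::real^'d) $ j = (1 - rho / p j) * Q \<and>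
          psi j 0 - rho / p j * psi j ((0::real^'d) $ j) = (1 - rho / p j) * H"
    by (intro exI[of _ 0] exI[of _ "psi j 0"]) (simp add: algebra_simps)
qed

lemma inv_step:
  assumes inv: "Inv (x, v, h)"
  shows "Inv (mystep i (x, v, h))"
  unfolding mystep_def Inv_def split
proof (intro allI conjI impI)
  fix j
  assume "psi j = (\<lambda>_. 0)"
  then show "hnew x v h i j = 0" using inv by (simp add: Inv_def hnew_def)
next
  fix j
  assume nz: "psi j \<noteq> (\<lambda>_. 0)"
  have "\<forall>j. (psi j = (\<lambda>_. 0) \<longrightarrow> h j = 0) \<and>
   (psi j \<noteq> (\<lambda>_. 0) \<longrightarrow> (\<exists>Q H. psi j Q \<le> H \<and> x $ j - rho / p j * v $ j = (1 - rho / p j) * Q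
        \<and> h j - rho / p j * psi j (v $ j) = (1 - rho / p j) * H))"
    using inv unfolding Inv_def prod.case .
  then obtain Q H where QH: "psi j Q \<le> H" "x $ j - rho / p j * v $ j = (1 - rho / p j) * Q"
     "h j - rho / p j * psi j (v $ j) = (1 - rho / p j) * H"
    using nz by blast
  define r where "r = rho / p j"
  define m where "m = 1 - r"
  have pj: "p j > 0" by (rule pp)
  have rp: "rho \<le> p j" by (rule psi_nz_rho[OF nz])
  have r0: "0 \<le> r" and r1: "r \<le> 1" using rp pj rho_pos by (auto simp: r_def field_simps)
  have ipr: "rho * inverse (p j) \<le> 1" using rp pj by (simp add: field_simps)
  have ipr0: "rho * inverse (p j) \<ge> 0" using rho_pos pj by simp
  have kk0: "kk j \<ge> 0"
  proof -
    have "rho^2 \<le> rho" using rho_pos rho_less1 by (simp add: power2_eq_square mult_left_le)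
    then have "rho^2 * inverse (p j) \<le> rho * inverse (p j)" using pj by (simp add: mult_right_mono)
    then have "rho^2 * inverse (p j) \<le> 1" using ipr by linarith
    then show ?thesis using rho_pos by (simp add: kk_def)
  qed
  define cv where "cv = kk j * r + cc j"
  define cq where "cq = kk j * m"
  have cv0: "cv \<ge> 0"
  proof -
    have e: "cv = rho * inverse (1 + rho) * (1 - (rho * inverse (p j))^2)"
      unfolding cv_def kk_def cc_def r_def using ip1[of j] iq1
      by (simp add: divide_inverse algebra_simps power2_eq_square)
    have "(rho * inverse (p j))^2 \<le> 1" using ipr ipr0 by (simp add: power_le_one)
    then show ?thesis unfolding e using rho_pos by simp
  qed
  have cq0: "cq \<ge> 0" using kk0 r1 by (simp add: cq_def m_def)
  have sum: "cv + cq = m"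
  proof -
    have "cv + cq = kk j + cc j" by (simp add: cv_def cq_def m_def algebra_simps)
    also have "\<dots> = ((1 + rho) * inverse (1 + rho)) * (1 - rho * inverse (p j))"
      by (simp add: kk_def cc_def algebra_simps power2_eq_square)
    also have "\<dots> = m" unfolding iq1 by (simp add: m_def r_def divide_inverse)
    finally show ?thesis .
  qed
  obtain Q' H' where Q': "psi j Q' \<le> H'" "cv * v $ j + cq * Q = m * Q'" "cv * psi j (v $ j) + cq * H = m * H'"
    using combine[OF psi_convex[rule_format] cv0 cq0 sum QH(1)] by blast
  have ex: "xnew x v i $ j - r * vnew x v i $ j = m * Q'"
  proof -
    have "xnew x v i $ j - r * vnew x v i $ j = kk j * x $ j + cc j * v $ j"
      by (simp add: xnew_comp[OF nz] r_def)
    also have "\<dots> = kk j * (r * v $ j + m * Q) + cc j * v $ j"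
    proof -
      have "x $ j - r * v $ j = m * Q" using QH(2) unfolding r_def m_def .
      then have "x $ j = r * v $ j + m * Q" by linarith
      then show ?thesis by simp
    qed
    also have "\<dots> = cv * v $ j + cq * Q" by (simp add: cv_def cq_def algebra_simps)
    finally show ?thesis using Q'(2) by simp
  qed
  have eh: "hnew x v h i j - r * psi j (vnew x v i $ j) = m * H'"
  proof -
    have "hnew x v h i j - r * psi j (vnew x v i $ j) = kk j * h j + cc j * psi j (v $ j)"
      by (simp add: hnew_def r_def)
    also have "\<dots> = kk j * (r * psi j (v $ j) + m * H) + cc j * psi j (v $ j)"
    proof -
      have "h j - r * psi j (v $ j) = m * H" using QH(3) unfolding r_def m_def .
      then have "h j = r * psi j (v $ j) + m * H" by linarith
      then show ?thesis by simp
    qed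
    also have "\<dots> = cv * psi j (v $ j) + cq * H" by (simp add: cv_def cq_def algebra_simps)
    finally show ?thesis using Q'(3) by simp
  qed
  show "\<exists>Q H. psi j Q \<le> H \<and> xnew x v i $ j - rho / p j * vnew x v i $ j = (1 - rho / p j) * Q \<and>
          hnew x v h i j - rho / p j * psi j (vnew x v i $ j) = (1 - rho / p j) * H"
    using Q'(1) ex eh unfolding r_def m_def by blast
qed

lemma inv_run: "Inv s \<Longrightarrow> Inv (myrun s is)"
proof (induction "is" arbitrary: s)
  case Nil then show ?case by simp
next
  case (Cons i "is")
  obtain x v h where s: "s = (x, v, h)" by (cases s) auto
  show ?case using Cons.IH inv_step Cons.prems s by simp
qed

end

lemma sqnormA_neg: "sqnormA A (- u) = sqnormA A u"
  using sqnormA_scale[of A "-1" u] by simp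

lemma sqnormA_convex:
  assumes t0: "0 \<le> t" and t1: "t \<le> 1"
  shows "sqnormA A ((1 - t) *\<^sub>R a + t *\<^sub>R b) \<le> (1 - t) * sqnormA A a + t * sqnormA A b"
proof -
  define c where "c = a \<bullet> (projA A *v b)"
  have e1: "sqnormA A ((1 - t) *\<^sub>R a + t *\<^sub>R b) = (1 - t)^2 * sqnormA A a + 2 * ((1 - t) * t) * c + t^2 * sqnormA A b"
    unfolding sqnormA_add sqnormA_scale c_def by (simp add: matrix_vector_mult_scaleR)
  have mn: "projA A *v (- b) = - (projA A *v b)"
    using matrix_vector_mult_scaleR[of "projA A" "-1" b] by simp
  have e2: "sqnormA A (a - b) = sqnormA A a - 2 * c + sqnormA A b"
    using sqnormA_add[of A a "- b"] by (simp add: sqnormA_neg c_def mn)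
  have "0 \<le> ((1 - t) * t) * sqnormA A (a - b)"
    using t0 t1 sqnormA_nonneg by (intro mult_nonneg_nonneg) auto
  then show ?thesis unfolding e1 using e2
    by (simp add: algebra_simps power2_eq_square)
qed

context apcg_loc begin

lemma vnew_eq: "vnew x v i = wv x v + (uu x v i - wv x v $ i) *\<^sub>R axis i 1"
  by (simp add: vec_eq_iff vnew_comp axis_def)

lemma xnew_eq: "xnew x v i = yv x v + (rho * Rcoef A i / p i * (uu x v i - wv x v $ i)) *\<^sub>R axis i 1"
  unfolding xnew_def vnew_eq by simp

lemma f_xnew:
  "f (xnew x v i) \<le> f (yv x v) + (rho * Rcoef A i / p i * (uu x v i - wv x v $ i)) * gradf (yv x v) $ i
     + M i / 2 * (rho * Rcoef A i / p i * (uu x v i - wv x v $ i))^2"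
  unfolding xnew_eq by (rule smooth_ub[OF diff smooth])

lemma Pcomp: "(projA A *v a) $ i = a \<bullet> (projA A *v axis i 1)"
proof -
  have "(projA A *v a) $ i = (projA A *v a) \<bullet> axis i 1" by (simp add: inner_axis)
  then show ?thesis by (simp add: projA_sa)
qed

lemma Q_vnew:
  "sqnormA A (vnew x v i - theta) = sqnormA A (wv x v - theta)
     + 2 * (uu x v i - wv x v $ i) * (projA A *v (wv x v - theta)) $ i
     + (uu x v i - wv x v $ i)^2 * Rcoef A i"
proof -
  have e: "vnew x v i - theta = (wv x v - theta) + (uu x v i - wv x v $ i) *\<^sub>R axis i 1"
    unfolding vnew_eq by simp
  show ?thesis
    unfolding e sqnormA_add sqnormA_scale
    by (simp add: matrix_vector_mult_scaleR Pcomp Rcoef_def sqnormA_def)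
qed

lemma Q_w: "sqnormA A (wv x v - theta) \<le> (1 - rho) * sqnormA A (v - theta) + rho * sqnormA A (yv x v - theta)"
proof -
  have "wv x v - theta = (1 - rho) *\<^sub>R (v - theta) + rho *\<^sub>R (yv x v - theta)"
    by (simp add: wv_def algebra_simps)
  then show ?thesis using sqnormA_convex[of rho A "v - theta" "yv x v - theta"] rho_pos rho_less1 by simp
qed

lemma f_y:
  "f (yv x v) \<le> (1 - rho) * f x + rho * f theta + rho * (gradf (yv x v) \<bullet> (projA A *v (wv x v - theta)))
     - rho * (sigma * sqnormA A (yv x v - theta)) / 2"
proof -
  define y where "y = yv x v"
  define w where "w = wv x v"
  define g where "g = gradf y"
  define L where "L u = g \<bullet> (projA A *v u)" for u
  have Llin: "L (a *\<^sub>R u + b *\<^sub>R z) = a * L u + b * L z" for a b u z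
    by (simp add: L_def matrix_vector_right_distrib matrix_vector_mult_scaleR inner_add_right)
  have vid: "(1 - rho) *\<^sub>R (x - y) + rho *\<^sub>R (theta - y) = (- rho) *\<^sub>R (w - theta) + 0 *\<^sub>R w"
  proof -
    have "(1 - rho) * (x $ j - y $ j) + rho * (theta $ j - y $ j) = - rho * (w $ j - theta $ j)" for j
    proof -
      have "(1 - rho) * (x $ j - y $ j) + rho * (theta $ j - y $ j) + rho * (w $ j - theta $ j)
          = x $ j * (1 - rho) * (1 - (1 + rho) * inverse (1 + rho))"
        unfolding y_def w_def yv_comp wv_comp by (simp add: divide_inverse algebra_simps)
      then show ?thesis unfolding iq1 by simp
    qed
    then show ?thesis by (simp add: vec_eq_iff)
  qed
  have 1: "f x - f y \<ge> L (x - y)"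
  proof -
    have "f x - f y \<ge> L (x - y) + sigma / 2 * sqnormA A (x - y)"
      using spec[OF spec[OF rel_sc, of x], of y] by (simp add: L_def g_def)
    moreover have "sigma / 2 * sqnormA A (x - y) \<ge> 0"
      using sigma_pos sqnormA_nonneg[of A "x - y"] by (intro mult_nonneg_nonneg) auto
    ultimately show ?thesis by linarith
  qed
  have 2: "f theta - f y \<ge> L (theta - y) + sigma / 2 * sqnormA A (y - theta)"
    using spec[OF spec[OF rel_sc, of theta], of y] sqnormA_neg[of A "y - theta"]
    by (simp add: L_def g_def)
  have a1: "(1 - rho) * (f x - f y) \<ge> (1 - rho) * L (x - y)"
    using 1 rho_less1 by (intro mult_left_mono) auto
  have a2: "rho * (f theta - f y) \<ge> rho * (L (theta - y) + sigma / 2 * sqnormA A (y - theta))"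
    using 2 rho_pos by (intro mult_left_mono) auto
  have "(1 - rho) * L (x - y) + rho * L (theta - y) = - rho * L (w - theta)"
    using arg_cong[OF vid, of L] unfolding Llin by simp
  then show ?thesis using a1 a2
    unfolding y_def[symmetric] w_def[symmetric] g_def[symmetric] L_def[symmetric]
    by (simp add: algebra_simps)
qed

end

context apcg_loc begin

lemma pse: "p i * sigma * eta i = rho"
  using pp[of i] sigma_pos by (simp add: eta_def)

lemma per_i:
  fixes x v :: "real^'d" and i :: 'd
  defines "d \<equiv> uu x v i - wv x v $ i"
    and "E \<equiv> (projA A *v (wv x v - theta)) $ i"
    and "G \<equiv> gradf (yv x v) $ i"
    and "tau \<equiv> rho * Rcoef A i / p i"
  shows "p i * (sigma * (2 * d * E + d^2 * Rcoef A i) + 2 * (tau * d * G) + M i * (tau * d)^2) + 2 * rho * G * E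
     \<le> 2 * rho * (psi i (theta $ i) - psi i (uu x v i))"
proof -
  define R where "R = Rcoef A i"
  have pt: "p i * tau = rho * R" using pp[of i] by (simp add: tau_def R_def)
  have R0: "R \<ge> 0" unfolding R_def by (rule Rcoef_nonneg)
  define z where "z = wv x v $ i - eta i * G"
  have u: "uu x v i = prox (eta i) (psi i) z" by (simp add: uu_def z_def G_def)
  have LHS: "p i * (sigma * (2 * d * E + d^2 * Rcoef A i) + 2 * (tau * d * G) + M i * (tau * d)^2) + 2 * rho * G * E
      = 2 * E * (p i * sigma * d + rho * G) + (p i * sigma * d) * R * d + 2 * (p i * tau) * d * G
        + M i * tau * (p i * tau) * d^2"
    by (simp add: R_def algebra_simps power2_eq_square)
  show ?thesis
  proof (cases "psi i = (\<lambda>_. 0)")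
    case True
    have uz: "uu x v i = z" unfolding u True by (rule prox_zero[OF eta_pos])
    have dd: "d = - (eta i * G)" by (simp add: d_def uz z_def)
    have s1: "p i * sigma * d = - (rho * G)" unfolding dd using pse[of i] by (simp add: algebra_simps)
    have Mt: "M i * tau * eta i \<le> 1"
    proof -
      have "M i * tau * eta i = (M i * Rcoef A i * rho^2) / (sigma * (p i)^2)"
        using pp[of i] sigma_pos by (simp add: tau_def eta_def power2_eq_square ac_simps)
      also have "\<dots> \<le> 1" using key_M[of i] pp[of i] sigma_pos by (simp add: pos_divide_le_eq)
      finally show ?thesis .
    qed
    have "2 * E * (p i * sigma * d + rho * G) + (p i * sigma * d) * R * d + 2 * (p i * tau) * d * G
        + M i * tau * (p i * tau) * d^2 = rho * R * d * G + M i * tau * (rho * R) * d^2"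
      unfolding s1 pt by (simp add: algebra_simps)
    also have "\<dots> = - (rho * R * (eta i * G^2) * (1 - M i * tau * eta i))"
      unfolding dd by (simp add: algebra_simps power2_eq_square)
    also have "\<dots> \<le> 0"
      using Mt R0 rho_pos eta_pos[of i] by (simp add: mult_nonneg_nonneg)
    finally show ?thesis unfolding LHS True by simp
  next
    case False
    then have R1: "R = 1" using psi_nz_R by (simp add: R_def)
    have E1: "E = wv x v $ i - theta $ i"
      using Rcoef_one[OF R1[unfolded R_def]] by (simp add: E_def Pcomp inner_axis)
    have pt1: "p i * tau = rho" using pt R1 by simp
    define s where "s = p i * sigma"
    define D0 where "D0 = uu x v i - theta $ i"
    have ED: "E = D0 - d" by (simp add: E1 D0_def d_def)
    have se: "s * eta i = rho" using pse[of i] by (simp add: s_def)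
    have prox: "psi i (theta $ i) \<ge> psi i (uu x v i) - (theta $ i - uu x v i) * (uu x v i - z) / eta i"
      unfolding u by (rule prox_opt[OF psi_convex[rule_format] eta_pos])
    have k1: "(theta $ i - uu x v i) * (uu x v i - z) = - (D0 * (uu x v i - z))"
      by (simp add: D0_def algebra_simps)
    have "psi i (theta $ i) - psi i (uu x v i) \<ge> D0 * (uu x v i - z) / eta i"
      using prox unfolding k1 by simp
    then have "2 * rho * (psi i (theta $ i) - psi i (uu x v i)) \<ge> 2 * rho * (D0 * (uu x v i - z) / eta i)"
      using rho_pos by (intro mult_left_mono) auto
    also have "2 * rho * (D0 * (uu x v i - z) / eta i) = 2 * D0 * (s * d + rho * G)"
    proof -
      have "uu x v i - z = d + eta i * G" by (simp add: d_def z_def)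
      then have "2 * rho * (D0 * (uu x v i - z) / eta i) = 2 * D0 * (rho / eta i * d + rho * G)"
        using eta_pos[of i] by (simp add: field_simps)
      moreover have "rho / eta i = s" using se eta_pos[of i] by (simp add: field_simps)
      ultimately show ?thesis by simp
    qed
    finally have B: "2 * rho * (psi i (theta $ i) - psi i (uu x v i)) \<ge> 2 * D0 * (s * d + rho * G)" .
    have Ms: "M i * tau * rho \<le> s"
    proof -
      have "M i * tau * rho = (M i * Rcoef A i * rho^2) / p i"
        using pp[of i] R1 by (simp add: tau_def R_def power2_eq_square)
      also have "\<dots> \<le> sigma * (p i)^2 / p i" using key_M[of i] pp[of i] by (simp add: divide_right_mono)
      also have "\<dots> = s" using pp[of i] by (simp add: s_def power2_eq_square)
      finally show ?thesis .
    qed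
    have "2 * E * (p i * sigma * d + rho * G) + (p i * sigma * d) * R * d + 2 * (p i * tau) * d * G
        + M i * tau * (p i * tau) * d^2 = 2 * D0 * (s * d + rho * G) + d^2 * (M i * tau * rho - s)"
      unfolding pt1 R1 ED s_def[symmetric] by (simp add: algebra_simps power2_eq_square)
    also have "\<dots> \<le> 2 * D0 * (s * d + rho * G)"
      using Ms by (simp add: mult_nonneg_nonpos)
    finally show ?thesis unfolding LHS using B by linarith
  qed
qed

lemma h_exp:
  assumes inv: "Inv (x, v, h)"
  shows "(\<Sum>i\<in>UNIV. p i * hnew x v h i j) \<le> (1 - rho) * h j + rho * psi j (uu x v j)"
proof -
  define C where "C = kk j * h j + cc j * psi j (v $ j) + rho / p j * psi j (wv x v $ j)"
  define D where "D = rho / p j * (psi j (uu x v j) - psi j (wv x v $ j))"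
  have hn: "hnew x v h i j = C + (if i = j then D else 0)" for i
    by (auto simp: hnew_def vnew_comp C_def D_def algebra_simps)
  have "(\<Sum>i\<in>UNIV. p i * hnew x v h i j) = (\<Sum>i\<in>UNIV. p i * C + (if i = j then p i * D else 0))"
    unfolding hn by (intro sum.cong) (auto simp: algebra_simps)
  also have "\<dots> = C + p j * D"
    by (simp add: sum.distrib sum_distrib_right[symmetric] p_sum)
  also have "\<dots> = kk j * h j + cc j * psi j (v $ j) + (rho / p j - rho) * psi j (wv x v $ j) + rho * psi j (uu x v j)"
    using pp[of j] by (simp add: C_def D_def algebra_simps)
  finally have S: "(\<Sum>i\<in>UNIV. p i * hnew x v h i j) =
      kk j * h j + cc j * psi j (v $ j) + (rho / p j - rho) * psi j (wv x v $ j) + rho * psi j (uu x v j)" .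
  show ?thesis
  proof (cases "psi j = (\<lambda>_. 0)")
    case True
    then have "h j = 0" using inv by (simp add: Inv_def)
    then show ?thesis unfolding S True by simp
  next
    case False
    define q where "q = inverse (1 + rho)"
    define c1 where "c1 = rho / p j - rho"
    have c10: "c1 \<ge> 0"
    proof -
      have "rho * 1 \<le> rho / p j" using p_le1[of j] pp[of j] rho_pos by (simp add: field_simps)
      then show ?thesis by (simp add: c1_def)
    qed
    have wc: "wv x v $ j = (1 - rho * q) * v $ j + (rho * q) * x $ j"
    proof -
      have qq: "(1 - rho * q) = q" using iq1 by (simp add: q_def algebra_simps)
      have "wv x v $ j = q * v $ j + (rho * q) * x $ j"
        unfolding wv_comp by (simp add: q_def divide_inverse algebra_simps)
      then show ?thesis unfolding qq .
    qed
    have t0: "0 \<le> rho * q" and t1: "rho * q \<le> 1"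
      using rho_pos by (auto simp: q_def field_simps)
    have "psi j (wv x v $ j) \<le> (1 - rho * q) * psi j (v $ j) + (rho * q) * psi j (x $ j)"
      unfolding wc by (rule cvx[OF psi_convex[rule_format] t0 t1])
    also have "\<dots> \<le> (1 - rho * q) * psi j (v $ j) + (rho * q) * h j"
      using inv_psi[OF inv, of j] t0 by (simp add: mult_left_mono)
    also have "(1 - rho * q) = q" using iq1 by (simp add: q_def algebra_simps)
    finally have pw: "psi j (wv x v $ j) \<le> q * psi j (v $ j) + rho * q * h j" by simp
    have id1: "cc j + c1 * q = 0"
      unfolding cc_def c1_def q_def using ip1[of j] by (simp add: divide_inverse algebra_simps)
    have id2: "kk j + c1 * rho * q = 1 - rho"
    proof -
      have "kk j + c1 * rho * q = ((1 + rho) * inverse (1 + rho)) * (1 - rho)"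
        unfolding kk_def c1_def q_def by (simp add: divide_inverse algebra_simps power2_eq_square)
      then show ?thesis unfolding iq1 by simp
    qed
    have "c1 * psi j (wv x v $ j) \<le> c1 * (q * psi j (v $ j) + rho * q * h j)"
      using pw c10 by (rule mult_left_mono)
    then have "kk j * h j + cc j * psi j (v $ j) + c1 * psi j (wv x v $ j)
        \<le> (kk j + c1 * rho * q) * h j + (cc j + c1 * q) * psi j (v $ j)"
      by (simp add: algebra_simps)
    then show ?thesis unfolding S id1 id2 c1_def[symmetric] by simp
  qed
qed

end

lemma lists_Suc_sum:
  "(\<Sum>is\<in>{is::'d::finite list. length is = Suc n}. F is) = (\<Sum>i\<in>UNIV. \<Sum>is\<in>{is. length is = n}. F (i # is))"
proof -
  have fin: "finite {is::'d list. length is = n}"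
    using finite_lists_length_eq[of "UNIV::'d set" n] by simp
  have eq: "{is::'d list. length is = Suc n} = (\<lambda>(i, is). i # is) ` (UNIV \<times> {is. length is = n})"
    by (auto simp: length_Suc_conv image_iff)
  have inj: "inj_on (\<lambda>(i, is). i # is) (UNIV \<times> {is::'d list. length is = n})"
    by (auto simp: inj_on_def)
  show ?thesis
    unfolding eq sum.reindex[OF inj] sum.cartesian_product
    by (intro sum.cong) auto
qed

lemma lists_zero: "{is::'d list. length is = 0} = {[]}" by auto

lemma prod_sum_one:
  fixes p :: "'d::finite \<Rightarrow> real"
  assumes "(\<Sum>i\<in>UNIV. p i) = 1"
  shows "(\<Sum>is\<in>{is::'d list. length is = n}. prod_list (map p is)) = 1"
proof (induction n)
  case 0 then show ?case by (simp add: lists_zero)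
next
  case (Suc n)
  have "(\<Sum>is\<in>{is::'d list. length is = Suc n}. prod_list (map p is))
      = (\<Sum>i\<in>UNIV. p i * (\<Sum>is\<in>{is. length is = n}. prod_list (map p is)))"
    unfolding lists_Suc_sum by (simp add: sum_distrib_left)
  then show ?case using Suc assms by simp
qed

context apcg_loc begin

lemma lyap_step:
  assumes inv: "Inv (x, v, h)"
  shows "(\<Sum>i\<in>UNIV. p i * Lf (mystep i (x, v, h))) \<le> (1 - rho) * Lf (x, v, h)"
proof -
  define y where "y = yv x v"
  define w where "w = wv x v"
  define G where "G i = gradf y $ i" for i
  define E where "E i = (projA A *v (w - theta)) $ i" for i
  define d where "d i = uu x v i - w $ i" for i
  define tau where "tau i = rho * Rcoef A i / p i" for i
  define T where "T i = sigma * (2 * d i * E i + (d i)^2 * Rcoef A i) + 2 * (tau i * d i * G i) + M i * (tau i * d i)^2" for i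
  define qw where "qw = sqnormA A (w - theta)"
  define qv where "qv = sqnormA A (v - theta)"
  define qy where "qy = sqnormA A (y - theta)"
  define Gw where "Gw = gradf y \<bullet> (projA A *v (w - theta))"
  define C where "C = sigma * qw + 2 * f y - 2 * Fstar"
  define HN where "HN i = (\<Sum>j\<in>UNIV. hnew x v h i j)" for i
  define SH where "SH = (\<Sum>j\<in>UNIV. h j)"
  define SU where "SU = (\<Sum>j\<in>UNIV. psi j (uu x v j))"
  define ST where "ST = (\<Sum>j\<in>UNIV. psi j (theta $ j))"
  have Lstep: "Lf (mystep i (x, v, h)) \<le> C + T i + 2 * HN i" for i
  proof -
    have "Lf (mystep i (x, v, h)) = sigma * sqnormA A (vnew x v i - theta) + 2 * (f (xnew x v i) + HN i - Fstar)"
      by (simp add: Lf_def mystep_def HN_def)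
    also have "sigma * sqnormA A (vnew x v i - theta) = sigma * qw + sigma * (2 * d i * E i + (d i)^2 * Rcoef A i)"
      unfolding Q_vnew qw_def d_def E_def w_def by (simp add: algebra_simps)
    also have "f (xnew x v i) \<le> f y + tau i * d i * G i + M i / 2 * (tau i * d i)^2"
      using f_xnew[where x=x and v=v and i=i] by (simp add: y_def tau_def d_def G_def w_def)
    finally show ?thesis by (simp add: C_def T_def algebra_simps)
  qed
  have F1: "(\<Sum>i\<in>UNIV. p i * Lf (mystep i (x, v, h))) \<le> C + (\<Sum>i\<in>UNIV. p i * T i) + 2 * (\<Sum>i\<in>UNIV. p i * HN i)"
  proof -
    have "(\<Sum>i\<in>UNIV. p i * Lf (mystep i (x, v, h))) \<le> (\<Sum>i\<in>UNIV. p i * C + p i * T i + 2 * (p i * HN i))"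
    proof (rule sum_mono)
      fix i :: 'd
      have "p i * Lf (mystep i (x, v, h)) \<le> p i * (C + T i + 2 * HN i)"
        using Lstep[of i] pp[of i] by (intro mult_left_mono) auto
      then show "p i * Lf (mystep i (x, v, h)) \<le> p i * C + p i * T i + 2 * (p i * HN i)"
        by (simp add: algebra_simps)
    qed
    also have "\<dots> = C + (\<Sum>i\<in>UNIV. p i * T i) + 2 * (\<Sum>i\<in>UNIV. p i * HN i)"
      by (simp add: sum.distrib sum_distrib_left[symmetric] sum_distrib_right[symmetric] p_sum)
    finally show ?thesis .
  qed
  have F2: "(\<Sum>i\<in>UNIV. p i * T i) + 2 * (rho * Gw) \<le> 2 * (rho * ST) - 2 * (rho * SU)"
  proof -
    have Gws: "Gw = (\<Sum>i\<in>UNIV. G i * E i)"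
      by (simp add: Gw_def G_def E_def inner_vec_def)
    have "(\<Sum>i\<in>UNIV. p i * T i + 2 * rho * G i * E i) \<le> (\<Sum>i\<in>UNIV. 2 * rho * (psi i (theta $ i) - psi i (uu x v i)))"
    proof (rule sum_mono)
      fix i
      show "p i * T i + 2 * rho * G i * E i \<le> 2 * rho * (psi i (theta $ i) - psi i (uu x v i))"
        using per_i[where x=x and v=v and i=i] by (simp add: T_def d_def E_def G_def tau_def w_def y_def)
    qed
    then show ?thesis
      by (simp add: Gws ST_def SU_def sum.distrib sum_subtractf sum_distrib_left algebra_simps)
  qed
  have F3: "(\<Sum>i\<in>UNIV. p i * HN i) \<le> SH - rho * SH + rho * SU"
  proof -
    have "(\<Sum>i\<in>UNIV. p i * HN i) = (\<Sum>j\<in>UNIV. \<Sum>i\<in>UNIV. p i * hnew x v h i j)"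
      unfolding HN_def sum_distrib_left by (rule sum.swap)
    also have "\<dots> \<le> (\<Sum>j\<in>UNIV. (1 - rho) * h j + rho * psi j (uu x v j))"
      by (rule sum_mono) (rule h_exp[OF inv])
    also have "\<dots> = (1 - rho) * SH + rho * SU"
      by (simp add: SH_def SU_def sum.distrib sum_distrib_left)
    also have "\<dots> = SH - rho * SH + rho * SU"
      by (simp add: algebra_simps)
    finally show ?thesis .
  qed
  have F4: "sigma * qw \<le> sigma * qv - rho * (sigma * qv) + rho * (sigma * qy)"
  proof -
    have "sigma * qw \<le> sigma * ((1 - rho) * qv + rho * qy)"
      using Q_w[where x=x and v=v] sigma_pos by (intro mult_left_mono) (auto simp: qw_def qv_def qy_def w_def y_def)
    then show ?thesis by (simp add: algebra_simps)
  qed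
  have F5: "f y \<le> f x - rho * f x + rho * f theta + rho * Gw - rho * (sigma * qy) / 2"
    using f_y[where x=x and v=v] by (simp add: y_def Gw_def qy_def w_def algebra_simps)
  have F6: "rho * Fstar = rho * f theta + rho * ST"
    by (simp add: Fstar_def Fobj_def ST_def algebra_simps)
  have goal: "(1 - rho) * Lf (x, v, h) = sigma * qv - rho * (sigma * qv) + 2 * f x - 2 * (rho * f x)
      + 2 * SH - 2 * (rho * SH) - 2 * Fstar + 2 * (rho * Fstar)"
    by (simp add: Lf_def qv_def SH_def algebra_simps)
  show ?thesis unfolding goal using F1 F2 F3 F4 F5 F6 unfolding C_def by linarith
qed

lemma main_ind:
  assumes "Inv s"
  shows "expect_path p n (\<lambda>is. Lf (myrun s is)) \<le> (1 - rho) ^ n * Lf s"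
  using assms
proof (induction n arbitrary: s)
  case 0
  then show ?case by (simp add: expect_path_def lists_zero)
next
  case (Suc n)
  obtain x v h where s: "s = (x, v, h)" by (cases s) auto
  have "expect_path p (Suc n) (\<lambda>is. Lf (myrun s is))
      = (\<Sum>i\<in>UNIV. p i * expect_path p n (\<lambda>is. Lf (myrun (mystep i s) is)))"
    unfolding expect_path_def lists_Suc_sum by (simp add: sum_distrib_left mult.assoc)
  also have "\<dots> \<le> (\<Sum>i\<in>UNIV. p i * ((1 - rho) ^ n * Lf (mystep i s)))"
  proof (rule sum_mono)
    fix i
    have "Inv (mystep i s)" unfolding s by (rule inv_step[OF Suc.prems[unfolded s]])
    then show "p i * expect_path p n (\<lambda>is. Lf (myrun (mystep i s) is)) \<le> p i * ((1 - rho) ^ n * Lf (mystep i s))"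
      using Suc.IH pp[of i] by (intro mult_left_mono) auto
  qed
  also have "\<dots> = (1 - rho) ^ n * (\<Sum>i\<in>UNIV. p i * Lf (mystep i s))"
    by (simp add: sum_distrib_left algebra_simps)
  also have "\<dots> \<le> (1 - rho) ^ n * ((1 - rho) * Lf s)"
    using lyap_step[OF Suc.prems[unfolded s]] rho_less1 unfolding s
    by (intro mult_left_mono) auto
  also have "\<dots> = (1 - rho) ^ Suc n * Lf s" by simp
  finally show ?case .
qed

end

theorem corollary1:
  fixes A :: "real^'d::finite^'m::finite"
    and f :: "real^'d \<Rightarrow> real" and gradf :: "real^'d \<Rightarrow> real^'d"
    and psi :: "'d \<Rightarrow> real \<Rightarrow> real"
    and p M :: "'d \<Rightarrow> real"
    and sigma S :: real and theta :: "real^'d"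
  assumes diff: "\<forall>x. (f has_derivative (\<lambda>h. gradf x \<bullet> h)) (at x)"
    and rel_sc: "\<forall>x y. f x - f y \<ge> gradf y \<bullet> (projA A *v (x - y)) + sigma / 2 * sqnormA A (x - y)"
    and smooth: "\<forall>i x h. \<bar>gradf (x + h *\<^sub>R axis i 1) $ i - gradf x $ i\<bar> \<le> M i * \<bar>h\<bar>"
    and psi_convex: "\<forall>i. convex_on UNIV (psi i)"
    and R_or_zero: "\<forall>i. Rcoef A i = 1 \<or> psi i = (\<lambda>_. 0)"
    and p_pos: "\<forall>i. p i > 0"
    and p_sum: "(\<Sum>i\<in>UNIV. p i) = 1"
    and minimizer: "\<forall>x. Fobj f psi theta \<le> Fobj f psi x"
    and sigma_pos: "sigma > 0"
    and S_pos: "S > 0"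
    and S_bound: "\<forall>i. S^2 \<ge> M i * Rcoef A i / (p i)^2"
    and rho_lt1: "sqrt sigma / S < 1"
  shows "(\<forall>i (t::nat). 1 - (sqrt sigma / S) * Rcoef A i / p i \<ge> 0) \<and>
    (\<forall>t. sigma * expect_path p t (\<lambda>is. sqnormA A
            (snd (apcg_iter A gradf psi p (\<lambda>_. sqrt sigma / S) (\<lambda>_. sqrt sigma / S)
                   (\<lambda>k. inverse ((1 - sqrt sigma / S) ^ k))
                   (\<lambda>k. sigma * inverse ((1 - sqrt sigma / S) ^ k)) is) - theta))
        + 2 * (expect_path p t (\<lambda>is. Fobj f psi
            (fst (apcg_iter A gradf psi p (\<lambda>_. sqrt sigma / S) (\<lambda>_. sqrt sigma / S)
                   (\<lambda>k. inverse ((1 - sqrt sigma / S) ^ k))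
                   (\<lambda>k. sigma * inverse ((1 - sqrt sigma / S) ^ k)) is)))
          - Fobj f psi theta)
      \<le> (sigma * (norm ((0::real^'d) - theta))^2 + 2 * 1 * (Fobj f psi 0 - Fobj f psi theta))
          * (1 - sqrt sigma / S) ^ t)"
proof -
  have L: "apcg_loc A f gradf psi p M sigma S theta"
    unfolding apcg_loc_def using diff rel_sc smooth psi_convex R_or_zero p_pos p_sum minimizer
      sigma_pos S_pos S_bound rho_lt1 by blast
  interpret L: apcg_loc A f gradf psi p M sigma S theta by (rule L)
  have r: "sqrt sigma / S = L.rho" by (simp add: L.rho_def)
  have part1: "\<forall>i (t::nat). 1 - (sqrt sigma / S) * Rcoef A i / p i \<ge> 0"
  proof (intro allI)
    fix i :: 'd and t :: nat
    have "L.rho * Rcoef A i / p i \<le> 1" using L.rhoR[of i] L.pp[of i] by (simp add: pos_divide_le_eq)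
    then show "1 - (sqrt sigma / S) * Rcoef A i / p i \<ge> 0" unfolding r by simp
  qed
  have part2: "sigma * expect_path p t (\<lambda>is. sqnormA A
            (snd (apcg_iter A gradf psi p (\<lambda>_. sqrt sigma / S) (\<lambda>_. sqrt sigma / S)
                   (\<lambda>k. inverse ((1 - sqrt sigma / S) ^ k))
                   (\<lambda>k. sigma * inverse ((1 - sqrt sigma / S) ^ k)) is) - theta))
        + 2 * (expect_path p t (\<lambda>is. Fobj f psi
            (fst (apcg_iter A gradf psi p (\<lambda>_. sqrt sigma / S) (\<lambda>_. sqrt sigma / S)
                   (\<lambda>k. inverse ((1 - sqrt sigma / S) ^ k))
                   (\<lambda>k. sigma * inverse ((1 - sqrt sigma / S) ^ k)) is)))
          - Fobj f psi theta)
      \<le> (sigma * (norm ((0::real^'d) - theta))^2 + 2 * 1 * (Fobj f psi 0 - Fobj f psi theta))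
          * (1 - sqrt sigma / S) ^ t" for t
  proof -
    define s0 where "s0 = ((0::real^'d), (0::real^'d), \<lambda>j. psi j 0)"
    define X where "X is = fst (L.myrun s0 is)" for "is"
    define V where "V is = fst (snd (L.myrun s0 is))" for "is"
    define H where "H is = snd (snd (L.myrun s0 is))" for "is"
    have it: "apcg_iter A gradf psi p (\<lambda>_. L.rho) (\<lambda>_. L.rho)
                   (\<lambda>k. inverse ((1 - L.rho) ^ k))
                   (\<lambda>k. sigma * inverse ((1 - L.rho) ^ k)) is = (X is, V is)" for "is"
      unfolding apcg_iter_def X_def V_def s0_def by (rule L.run_eq)
    have inv0: "L.Inv s0" unfolding s0_def by (rule L.inv_init)
    have runeq: "L.myrun s0 is = (X is, V is, H is)" for "is" by (simp add: X_def V_def H_def)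
    have invr: "L.Inv (X is, V is, H is)" for "is" using L.inv_run[OF inv0, of "is"] runeq by simp
    define w where "w is = prod_list (map p is)" for "is"
    have w0: "w is \<ge> 0" for "is"
      unfolding w_def by (rule prod_list_nonneg) (use L.pp in \<open>auto simp: less_imp_le\<close>)
    have w1: "(\<Sum>is\<in>{is::'d list. length is = t}. w is) = 1"
      unfolding w_def by (rule prod_sum_one[OF p_sum])
    have pw: "sigma * sqnormA A (V is - theta) + 2 * (Fobj f psi (X is) - Fobj f psi theta) \<le> L.Lf (L.myrun s0 is)" for "is"
    proof -
      have "(\<Sum>j\<in>UNIV. psi j (X is $ j)) \<le> (\<Sum>j\<in>UNIV. H is j)"
        by (rule sum_mono) (rule L.inv_psi[OF invr])
      then show ?thesis unfolding runeq by (simp add: L.Lf_def L.Fstar_def Fobj_def)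
    qed
    have "sigma * expect_path p t (\<lambda>is. sqnormA A (V is - theta)) + 2 * (expect_path p t (\<lambda>is. Fobj f psi (X is)) - Fobj f psi theta)
        = (\<Sum>is\<in>{is::'d list. length is = t}. w is * (sigma * sqnormA A (V is - theta) + 2 * (Fobj f psi (X is) - Fobj f psi theta)))"
    proof -
      have "(\<Sum>is\<in>{is::'d list. length is = t}. w is * (sigma * sqnormA A (V is - theta) + 2 * (Fobj f psi (X is) - Fobj f psi theta)))
          = sigma * (\<Sum>is\<in>{is::'d list. length is = t}. w is * sqnormA A (V is - theta))
            + 2 * (\<Sum>is\<in>{is::'d list. length is = t}. w is * Fobj f psi (X is))
            - 2 * Fobj f psi theta * (\<Sum>is\<in>{is::'d list. length is = t}. w is)"
        by (simp add: sum.distrib sum_subtractf sum_distrib_left sum_distrib_right algebra_simps)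
      then show ?thesis unfolding w1 by (simp add: expect_path_def w_def algebra_simps)
    qed
    also have "\<dots> \<le> (\<Sum>is\<in>{is::'d list. length is = t}. w is * L.Lf (L.myrun s0 is))"
      by (rule sum_mono) (rule mult_left_mono[OF pw w0])
    also have "\<dots> = expect_path p t (\<lambda>is. L.Lf (L.myrun s0 is))" by (simp add: expect_path_def w_def)
    also have "\<dots> \<le> (1 - L.rho) ^ t * L.Lf s0" by (rule L.main_ind[OF inv0])
    also have "\<dots> \<le> (1 - L.rho) ^ t * (sigma * (norm ((0::real^'d) - theta))^2 + 2 * 1 * (Fobj f psi 0 - Fobj f psi theta))"
    proof (rule mult_left_mono)
      have "sqnormA A (0 - theta) \<le> (norm ((0::real^'d) - theta))^2" by (rule sqnormA_le)
      then have "sigma * sqnormA A (0 - theta) \<le> sigma * (norm ((0::real^'d) - theta))^2"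
        using sigma_pos by (intro mult_left_mono) auto
      then show "L.Lf s0 \<le> sigma * (norm ((0::real^'d) - theta))^2 + 2 * 1 * (Fobj f psi 0 - Fobj f psi theta)"
        by (simp add: s0_def L.Lf_def L.Fstar_def Fobj_def)
      show "0 \<le> (1 - L.rho) ^ t" using L.rho_less1 by simp
    qed
    finally show ?thesis unfolding r it fst_conv snd_conv by (simp add: mult.commute)
  qed
  show ?thesis using part1 part2 by blast
qed

end
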